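(* Let $K>1$ be an integer, $N=2K+1$, $Z\in(0,\infty)$ and $\sigma\in\{+1,-1\}$. Define the sequence $(f_k(Z))_{k\in\mathbb{Z}}$ by $f_0(Z)=1$, $f_1(Z)=1+Z$ and $f_{k+2}(Z)=(2+Z)f_{k+1}(Z)-f_k(Z)$ for all $k\in\mathbb{Z}$, and set $\lambda_k(Z)=f_{K-k}(Z)$. Let $$d(Z)=\sum_{k=0}^N\binom{N}{k}\lambda_k(Z)\ket{D_N^k}\bra{D_N^k},\qquad o(\sigma)=\sigma\left(\ket{D_N^0}\bra{D_N^N}+\ket{D_N^N}\bra{D_N^0}\right),$$ and $\rho(Z)=\dfrac{d(Z)+o(\sigma)}{2(4+Z)^K}$. Then the $N$-qubit symmetric state $\rho(Z)$ is PPT with respect to every bipartition; the ranks of $\rho(Z),\rho(Z)^{\Gamma_1},\dots,\rho(Z)^{\Gamma_K}$ are $N+1,2N,\dots,2N,2N-1$ respectively; and $\rho(Z)$ is an extreme point of the set of $N$-qubit states that are PPT with respect to every bipartition (in particular, $\rho(Z)$ is entangled, i.e. not fully separable).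
   Context: For $N$ qubits with computational basis $\{\ket0,\ket1\}$, the Dicke state $\ket{D_N^k}$ ($0\le k\le N$) is the normalized equal superposition of all computational basis vectors of $(\mathbb{C}^2)^{\otimes N}$ with exactly $k$ qubits in $\ket1$. For $0\le m\le N$, $\rho^{\Gamma_m}$ denotes the partial transpose (in the computational basis) of $\rho$ with respect to a set of $m$ of the qubits (for a permutation-symmetric state this does not depend on which $m$ qubits). A state is PPT with respect to every bipartition if its partial transpose with respect to every subset of qubits is positive semidefinite. A state is fully separable if it is a convex combination of product states $\rho^{(1)}\otimes\cdots\otimes\rho^{(N)}$; it is entangled otherwise. *)

theory Defs
  imports Complex_Main "Jordan_Normal_Form.Matrix" "Jordan_Normal_Form.DL_Rank"
begin

text \<open>N-qubit operators are complex (2^N x 2^N) matrices. The computational basis vector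
  with index i < 2^N has qubit q (q < N) in state (i div 2^q) mod 2.\<close>

definition qbit :: "nat \<Rightarrow> nat \<Rightarrow> nat" where
  "qbit i q = (i div 2 ^ q) mod 2"

definition num_ones :: "nat \<Rightarrow> nat \<Rightarrow> nat" where
  "num_ones N i = (\<Sum>q<N. qbit i q)"

definition dicke :: "nat \<Rightarrow> nat \<Rightarrow> complex vec" where
  "dicke N k = vec (2 ^ N) (\<lambda>i. if num_ones N i = k then complex_of_real (1 / sqrt (real (N choose k))) else 0)"

definition ketbra :: "complex vec \<Rightarrow> complex vec \<Rightarrow> complex mat" where
  "ketbra u v = mat (dim_vec u) (dim_vec v) (\<lambda>(i, j). u $ i * cnj (v $ j))"

definition msum :: "nat \<Rightarrow> ('b \<Rightarrow> complex mat) \<Rightarrow> 'b set \<Rightarrow> complex mat" where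
  "msum n f I = mat n n (\<lambda>(i, j). \<Sum>x\<in>I. f x $$ (i, j))"

definition psd :: "nat \<Rightarrow> complex mat \<Rightarrow> bool" where
  "psd n A \<longleftrightarrow> A \<in> carrier_mat n n \<and>
     (\<forall>v\<in>carrier_vec n. Im ((A *\<^sub>v v) \<bullet>c v) = 0 \<and> Re ((A *\<^sub>v v) \<bullet>c v) \<ge> 0)"

definition mtrace :: "complex mat \<Rightarrow> complex" where
  "mtrace A = (\<Sum>i<dim_row A. A $$ (i, i))"

definition density :: "nat \<Rightarrow> complex mat \<Rightarrow> bool" where
  "density n A \<longleftrightarrow> psd n A \<and> mtrace A = 1"

definition pt_index :: "nat \<Rightarrow> nat set \<Rightarrow> nat \<Rightarrow> nat \<Rightarrow> nat" where
  "pt_index N M i j = (\<Sum>q<N. 2 ^ q * (if q \<in> M then qbit j q else qbit i q))"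

definition ptrans :: "nat \<Rightarrow> nat set \<Rightarrow> complex mat \<Rightarrow> complex mat" where
  "ptrans N M A = mat (2 ^ N) (2 ^ N) (\<lambda>(i, j). A $$ (pt_index N M i j, pt_index N M j i))"

definition ppt_all :: "nat \<Rightarrow> complex mat \<Rightarrow> bool" where
  "ppt_all N A \<longleftrightarrow> (\<forall>M. M \<subseteq> {..<N} \<longrightarrow> psd (2 ^ N) (ptrans N M A))"

definition ppt_states :: "nat \<Rightarrow> complex mat set" where
  "ppt_states N = {A. density (2 ^ N) A \<and> ppt_all N A}"

definition extreme_point_mat :: "complex mat \<Rightarrow> complex mat set \<Rightarrow> bool" where
  "extreme_point_mat x S \<longleftrightarrow> x \<in> S \<and>
     (\<forall>a\<in>S. \<forall>b\<in>S. \<forall>t::real. 0 < t \<and> t < 1 \<and>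
        x = complex_of_real t \<cdot>\<^sub>m a + complex_of_real (1 - t) \<cdot>\<^sub>m b \<longrightarrow> a = b)"

definition tensor_qubits :: "nat \<Rightarrow> (nat \<Rightarrow> complex mat) \<Rightarrow> complex mat" where
  "tensor_qubits N r = mat (2 ^ N) (2 ^ N) (\<lambda>(i, j). \<Prod>q<N. r q $$ (qbit i q, qbit j q))"

definition fully_separable :: "nat \<Rightarrow> complex mat \<Rightarrow> bool" where
  "fully_separable N A \<longleftrightarrow> (\<exists>(n::nat) (p::nat \<Rightarrow> real) (r::nat \<Rightarrow> nat \<Rightarrow> complex mat).
     (\<forall>l<n. p l \<ge> 0) \<and> (\<Sum>l<n. p l) = 1 \<and>
     (\<forall>l<n. \<forall>q<N. density 2 (r l q)) \<and>
     A = msum (2 ^ N) (\<lambda>l. complex_of_real (p l) \<cdot>\<^sub>m tensor_qubits N (r l)) {..<n})"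

definition mrank :: "nat \<Rightarrow> complex mat \<Rightarrow> nat" where
  "mrank n A = vec_space.rank n A"

end

theory Submission
  imports Defs
begin

definition bv :: "nat \<Rightarrow> (nat \<Rightarrow> nat) \<Rightarrow> nat" where
  "bv N c = (\<Sum>q<N. 2 ^ q * c q)"

lemma qbit_le1: "qbit i q \<le> 1" unfolding qbit_def by simp
lemma qbit_le_Suc0 [simp]: "qbit i q \<le> Suc 0" unfolding qbit_def by simp

lemma qbit_eq_bit: "qbit i q = (if bit i q then 1 else 0)"
  unfolding qbit_def bit_nat_def by (simp add: odd_iff_mod_2_eq_one)

lemma bv_Suc: "bv (Suc N) c = bv N c + 2 ^ N * c N"
  unfolding bv_def by simp

lemma bv_lt: assumes "\<And>q. c q \<le> 1" shows "bv N c < 2 ^ N"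
proof (induction N)
  case 0 then show ?case by (simp add: bv_def)
next
  case (Suc N)
  have "2 ^ N * c N \<le> 2 ^ N" using assms[of N] by simp
  then have "bv N c + 2 ^ N * c N < 2 ^ N + 2 ^ N" using Suc by linarith
  then show ?case by (simp add: bv_Suc)
qed

lemma qbit_bv: assumes "\<And>q. c q \<le> 1" and "q < N" shows "qbit (bv N c) q = c q"
  using assms(2)
proof (induction N)
  case 0 then show ?case by simp
next
  case (Suc N)
  have lt: "bv N c < 2 ^ N" using bv_lt assms(1) by blast
  show ?case
  proof (cases "q < N")
    case True
    have e: "2 ^ N * c N = 2 ^ q * (2 ^ (N - q) * c N)"
      using True by (simp add: power_add[symmetric])
    have ev: "even (2 ^ (N - q) * c N)" using True by simp
    have "(bv N c + 2 ^ N * c N) div 2 ^ q = bv N c div 2 ^ q + 2 ^ (N - q) * c N"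
      unfolding e by simp
    have "qbit (bv N c + 2 ^ N * c N) q = qbit (bv N c) q"
    proof -
      obtain z where z: "2 ^ (N - q) * c N = 2 * z" using ev by blast
      show ?thesis unfolding qbit_def \<open>(bv N c + 2 ^ N * c N) div 2 ^ q = _\<close> z by simp
    qed
    then show ?thesis using Suc True by (simp add: bv_Suc)
  next
    case False
    then have q: "q = N" using Suc by simp
    have "(bv N c + 2 ^ N * c N) div 2 ^ N = c N" using lt by simp
    moreover have "c N < 2" using assms(1)[of N] by simp
    ultimately show ?thesis unfolding q qbit_def bv_Suc by simp
  qed
qed

lemma bv_qbit: assumes "i < 2 ^ N" shows "bv N (qbit i) = i"
  using assms
proof (induction N arbitrary: i)
  case 0 then show ?case by (simp add: bv_def)
next
  case (Suc N)
  have "bv N (qbit i) = bv N (qbit (i mod 2 ^ N))"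
    unfolding bv_def
    by (intro sum.cong refl) (simp add: qbit_eq_bit bit_take_bit_iff flip: take_bit_eq_mod)
  also have "\<dots> = i mod 2 ^ N" using Suc.IH by simp
  finally have 1: "bv N (qbit i) = i mod 2 ^ N" .
  have "qbit i N = i div 2 ^ N" unfolding qbit_def using Suc.prems
    by (simp add: less_mult_imp_div_less)
  then show ?case using 1 by (simp add: bv_Suc mod_mult_div_eq)
qed

lemma bit_ext: assumes "i < 2 ^ N" "j < 2 ^ N" "\<And>q. q < N \<Longrightarrow> qbit i q = qbit j q"
  shows "i = j"
proof -
  have "bv N (qbit i) = bv N (qbit j)" unfolding bv_def using assms(3) by simp
  then show ?thesis using bv_qbit assms(1,2) by metis
qed

lemma num_ones_le: "num_ones N i \<le> N"
proof -
  have "num_ones N i \<le> (\<Sum>q<N. 1)" unfolding num_ones_def by (rule sum_mono) (simp add: qbit_le1)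
  then show ?thesis by simp
qed

definition mo :: "nat \<Rightarrow> nat set \<Rightarrow> nat \<Rightarrow> nat" where
  "mo N M i = (\<Sum>q<N. if q \<in> M then qbit i q else 0)"
definition mc :: "nat \<Rightarrow> nat set \<Rightarrow> nat \<Rightarrow> nat" where
  "mc N M i = (\<Sum>q<N. if q \<in> M then 0 else qbit i q)"
definition msz :: "nat \<Rightarrow> nat set \<Rightarrow> nat" where
  "msz N M = (\<Sum>q<N. if q \<in> M then 1 else 0)"

lemma num_ones_mo_mc: "num_ones N i = mo N M i + mc N M i"
  unfolding num_ones_def mo_def mc_def sum.distrib[symmetric] by (intro sum.cong) auto

lemma mo_le: "mo N M i \<le> msz N M"
  unfolding mo_def msz_def by (rule sum_mono) (simp add: qbit_le1)
lemma mc_le: "mc N M i \<le> N - msz N M"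
proof -
  have "mc N M i \<le> (\<Sum>q<N. if q \<in> M then 0 else 1)"
    unfolding mc_def by (rule sum_mono) (simp add: qbit_le1)
  moreover have "(\<Sum>q<N. if q \<in> M then 0 else 1) + msz N M = (N::nat)"
  proof -
    have e: "\<And>q. (if q \<in> M then 0 else 1) + (if q \<in> M then 1 else 0) = (1::nat)" by simp
    show ?thesis unfolding msz_def sum.distrib[symmetric] e by simp
  qed
  ultimately show ?thesis by linarith
qed

lemma pt_index_bv: "pt_index N M i j = bv N (\<lambda>q. if q \<in> M then qbit j q else qbit i q)"
  unfolding pt_index_def bv_def by simp

lemma pt_lt: "pt_index N M i j < 2 ^ N"
  unfolding pt_index_bv by (rule bv_lt) (simp add: qbit_le1)

lemma qbit_pt: "q < N \<Longrightarrow> qbit (pt_index N M i j) q = (if q \<in> M then qbit j q else qbit i q)"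
  unfolding pt_index_bv by (subst qbit_bv) (auto simp: qbit_le1)

lemma num_ones_pt: "num_ones N (pt_index N M i j) = mo N M j + mc N M i"
proof -
  have "num_ones N (pt_index N M i j) = (\<Sum>q<N. if q \<in> M then qbit j q else qbit i q)"
    unfolding num_ones_def by (intro sum.cong) (auto simp: qbit_pt)
  also have "\<dots> = mo N M j + mc N M i"
    unfolding mo_def mc_def sum.distrib[symmetric] by (intro sum.cong) auto
  finally show ?thesis .
qed

lemma pt_empty: "i < 2 ^ N \<Longrightarrow> pt_index N {} i j = i"
  using bv_qbit unfolding pt_index_bv by simp

lemma pt_full: "j < 2 ^ N \<Longrightarrow> pt_index N {..<N} i j = j"
proof -
  assume j: "j < 2 ^ N"
  have "pt_index N {..<N} i j = bv N (qbit j)"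
    unfolding pt_index_bv bv_def by (intro sum.cong) auto
  then show ?thesis using bv_qbit j by simp
qed


locale qs =
  fixes K N :: nat and Z \<sigma> :: real and f :: "int \<Rightarrow> real"
  assumes K1: "K > 1" and NK: "N = 2 * K + 1" and Zp: "Z > 0" and sig: "\<sigma> \<in> {1, -1}"
    and f0: "f 0 = 1" and f1: "f 1 = 1 + Z" and frec: "\<forall>k. f (k + 2) = (2 + Z) * f (k + 1) - f k"
begin

lemma sig2: "\<sigma> * \<sigma> = 1" using sig by auto
lemma sig_abs: "\<bar>\<sigma>\<bar> = 1" using sig by auto
lemma N_pos: "N > 0" using NK by simp
lemma N5: "N \<ge> 5" using NK K1 by simp

definition mu :: real where "mu = arcosh (1 + Z / 2) / 2"

lemma mu_pos: "mu > 0"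
  unfolding mu_def using Zp by simp

lemma cosh2mu: "cosh (2 * mu) = 1 + Z / 2"
  unfolding mu_def using Zp by simp

definition F :: "int \<Rightarrow> real" where "F n = cosh ((2 * of_int n + 1) * mu) / cosh mu"

lemma cosh_rec: "cosh (a + 2 * mu) = (2 + Z) * cosh a - cosh (a - 2 * mu)"
proof -
  have "cosh (a + 2 * mu) + cosh (a - 2 * mu) = 2 * cosh a * cosh (2 * mu)"
    by (simp add: cosh_add cosh_diff)
  then show ?thesis using cosh2mu by (simp add: algebra_simps)
qed

lemma F_rec: "F (k + 2) = (2 + Z) * F (k + 1) - F k"
proof -
  have "cosh ((2 * of_int (k + 2) + 1) * mu) = cosh ((2 * of_int (k + 1) + 1) * mu + 2 * mu)"
    by (simp add: algebra_simps)
  also have "\<dots> = (2 + Z) * cosh ((2 * of_int (k + 1) + 1) * mu) - cosh ((2 * of_int k + 1) * mu)"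
    by (subst cosh_rec) (simp add: algebra_simps)
  finally show ?thesis unfolding F_def by (simp add: diff_divide_distrib)
qed

lemma rec_unique:
  fixes g h :: "int \<Rightarrow> real"
  assumes g: "\<And>k. g (k + 2) = (2 + Z) * g (k + 1) - g k"
    and h: "\<And>k. h (k + 2) = (2 + Z) * h (k + 1) - h k"
    and e0: "g 0 = h 0" and e1: "g 1 = h 1"
  shows "g n = h n"
proof -
  have up: "g (int m) = h (int m) \<and> g (int m + 1) = h (int m + 1)" for m
  proof (induction m)
    case 0 then show ?case using e0 e1 by simp
  next
    case (Suc m)
    have "g (int m + 2) = h (int m + 2)" using g[of "int m"] h[of "int m"] Suc by simp
    then show ?case using Suc by (simp add: add.commute add.left_commute)
  qed
  have down: "g (- int m) = h (- int m) \<and> g (- int m + 1) = h (- int m + 1)" for m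
  proof (induction m)
    case 0 then show ?case using e0 e1 by simp
  next
    case (Suc m)
    have a: "g (- int (Suc m)) = (2 + Z) * g (- int m) - g (- int m + 1)"
      using g[of "- int (Suc m)"] by (simp add: algebra_simps)
    have b: "h (- int (Suc m)) = (2 + Z) * h (- int m) - h (- int m + 1)"
      using h[of "- int (Suc m)"] by (simp add: algebra_simps)
    have "- int (Suc m) + 1 = - int m" by simp
    then show ?case using a b Suc by simp
  qed
  show ?thesis
  proof (cases "n \<ge> 0")
    case True then show ?thesis using up[of "nat n"] by simp
  next
    case False then show ?thesis using down[of "nat (- n)"] by simp
  qed
qed

lemma f_closed: "f n = F n"
proof (rule rec_unique)
  show "\<And>k. f (k + 2) = (2 + Z) * f (k + 1) - f k" using frec by blast
  show "\<And>k. F (k + 2) = (2 + Z) * F (k + 1) - F k" by (rule F_rec)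
  show "f 0 = F 0" using f0 by (simp add: F_def)
  have "cosh (3 * mu) = (2 + Z) * cosh mu - cosh mu"
    using cosh_rec[of mu] by (simp add: algebra_simps)
  then show "f 1 = F 1" using f1 by (simp add: F_def field_simps)
qed

lemma f_rec': "f k = (2 + Z) * f (k + 1) - f (k + 2)"
  using frec by (simp add: algebra_simps)

lemma f_sym: "f (- n - 1) = f n"
proof -
  have "(2 * of_int (- n - 1) + 1) * mu = - ((2 * of_int n + 1) * mu)" by (simp add: algebra_simps)
  then show ?thesis unfolding f_closed F_def by simp
qed

lemma f_m1: "f (-1) = 1" using f_sym[of 0] f0 by simp

lemma f_ge1: "f n \<ge> 1"
proof -
  have i: "\<bar>2 * n + 1\<bar> \<ge> (1::int)" by arith
  have "\<bar>2 * of_int n + 1\<bar> = (of_int \<bar>2 * n + 1\<bar> :: real)" by simp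
  then have "\<bar>2 * of_int n + 1\<bar> \<ge> (1::real)" using i by (metis of_int_1 of_int_le_iff)
  then have "\<bar>(2 * of_int n + 1) * mu\<bar> \<ge> mu" using mu_pos by (simp add: abs_mult)
  then have "cosh \<bar>(2 * of_int n + 1) * mu\<bar> \<ge> cosh mu"
    using mu_pos by (subst cosh_real_nonneg_le_iff) auto
  then show ?thesis unfolding f_closed F_def by simp
qed

lemma f_gt1: assumes "n \<noteq> 0" "n \<noteq> -1" shows "f n > 1"
proof -
  have i: "\<bar>2 * n + 1\<bar> > (1::int)" using assms by arith
  have "\<bar>2 * of_int n + 1\<bar> = (of_int \<bar>2 * n + 1\<bar> :: real)" by simp
  then have "\<bar>2 * of_int n + 1\<bar> > (1::real)" using i by (metis of_int_1 of_int_less_iff)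
  then have "\<bar>(2 * of_int n + 1) * mu\<bar> > mu" using mu_pos by (simp add: abs_mult)
  then have "cosh \<bar>(2 * of_int n + 1) * mu\<bar> > cosh mu"
    using mu_pos by (subst cosh_real_nonneg_less_iff) auto
  then show ?thesis unfolding f_closed F_def by simp
qed

lemma int_shift_const:
  fixes W :: "int \<Rightarrow> 'a"
  assumes "\<And>n. W (n + 1) = W n" shows "W n = W 0"
proof -
  have up: "W (int m) = W 0" for m
  proof (induction m)
    case (Suc m)
    have "W (int m + 1) = W (int m)" by (rule assms)
    then show ?case using Suc by (simp add: add.commute)
  qed simp
  have down: "W (- int m) = W 0" for m
  proof (induction m)
    case (Suc m)
    have "W (- int (Suc m) + 1) = W (- int (Suc m))" by (rule assms)
    then show ?case using Suc by simp
  qed simp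
  show ?thesis
  proof (cases "n \<ge> 0")
    case True then show ?thesis using up[of "nat n"] by simp
  next
    case False then show ?thesis using down[of "nat (- n)"] by simp
  qed
qed

lemma casorati: "f (n + 1) * f (n - 1) - f n ^ 2 = Z"
proof -
  define W where "W n = f (n + 1) * f (n - 1) - f n ^ 2" for n
  have step: "W (n + 1) = W n" for n
  proof -
    have a: "f (n + 2) = (2 + Z) * f (n + 1) - f n" using frec by simp
    have b: "f (n + 1) = (2 + Z) * f n - f (n - 1)" using frec[rule_format, of "n - 1"] by (simp add: ac_simps)
    have "W (n + 1) = f (n + 2) * f n - f (n + 1) ^ 2" unfolding W_def by (simp add: add.assoc)
    also have "\<dots> = W n"
    proof -
      have b': "f (n - 1) = (2 + Z) * f n - f (n + 1)" using b by simp
      show ?thesis unfolding W_def a b' by (simp add: algebra_simps power2_eq_square)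
    qed
    finally show ?thesis .
  qed
  have "W n = W 0" by (rule int_shift_const) (rule step)
  also have "W 0 = Z" unfolding W_def using f0 f1 f_m1 by simp
  finally show ?thesis unfolding W_def .
qed

lemma trace_sum: "(\<Sum>k\<le>N. real (N choose k) * f (int K - int k)) = 2 * (4 + Z) ^ K"
proof -
  define a where "a = exp mu"
  define b where "b = exp (- mu)"
  have ab: "a * b = 1" unfolding a_def b_def by (simp add: exp_minus field_simps)
  have ch: "a + b = 2 * cosh mu" unfolding a_def b_def cosh_def by simp
  have fk: "f (int K - int k) = (a ^ (N - k) * b ^ k + b ^ (N - k) * a ^ k) / (a + b)" if "k \<le> N" for k
  proof -
    have "(2 * real_of_int (int K - int k) + 1) * mu = real (N - k) * mu - real k * mu"
      using that NK by (simp add: algebra_simps of_nat_diff)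
    then have "cosh ((2 * real_of_int (int K - int k) + 1) * mu)
        = (exp (real (N - k) * mu - real k * mu) + exp (- (real (N - k) * mu - real k * mu))) / 2"
      by (simp add: cosh_def)
    also have "\<dots> = (a ^ (N - k) * b ^ k + b ^ (N - k) * a ^ k) / 2"
      unfolding a_def b_def by (simp add: exp_diff exp_minus exp_of_nat_mult[symmetric] field_simps)
    finally show ?thesis unfolding f_closed F_def ch by (simp add: field_simps)
  qed
  have "(\<Sum>k\<le>N. real (N choose k) * f (int K - int k))
      = ((\<Sum>k\<le>N. real (N choose k) * b ^ k * a ^ (N - k)) + (\<Sum>k\<le>N. real (N choose k) * a ^ k * b ^ (N - k))) / (a + b)"
  proof -
    have apb: "a + b > 0" unfolding a_def b_def by (simp add: add_pos_pos)
    have "(\<Sum>k\<le>N. real (N choose k) * f (int K - int k))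
      = (\<Sum>k\<le>N. (real (N choose k) * b ^ k * a ^ (N - k) + real (N choose k) * a ^ k * b ^ (N - k)) / (a + b))"
      by (rule sum.cong[OF refl]) (use apb in \<open>simp add: fk field_simps\<close>)
    also have "\<dots> = ((\<Sum>k\<le>N. real (N choose k) * b ^ k * a ^ (N - k)) + (\<Sum>k\<le>N. real (N choose k) * a ^ k * b ^ (N - k))) / (a + b)"
      unfolding sum_divide_distrib[symmetric] sum.distrib ..
    finally show ?thesis .
  qed
  also have "\<dots> = 2 * (a + b) ^ N / (a + b)"
    by (simp add: binomial_ring[symmetric] add.commute)
  also have "\<dots> = 2 * (a + b) ^ (2 * K)"
    using ch NK by (simp add: field_simps)
  also have "(a + b) ^ (2 * K) = ((a + b) ^ 2) ^ K" by (simp add: power_mult)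
  also have "(a + b) ^ 2 = 4 + Z"
  proof -
    have "(a + b) ^ 2 = a * a + b * b + 2 * (a * b)" by (simp add: power2_eq_square algebra_simps)
    also have "a * a + b * b = 2 * cosh (2 * mu)" unfolding a_def b_def cosh_def
      by (simp add: exp_add[symmetric] exp_minus field_simps)
    finally show ?thesis using ab cosh2mu by simp
  qed
  finally show ?thesis .
qed

end


lemma conj_complex: "conjugate (z::complex) = cnj z"
  by (simp add: conjugate_complex_def)

lemma qform_sum:
  fixes A :: "complex mat"
  assumes "A \<in> carrier_mat n n" "v \<in> carrier_vec n"
  shows "(A *\<^sub>v v) \<bullet>c v = (\<Sum>i<n. \<Sum>j<n. A $$ (i, j) * v $ j * cnj (v $ i))"
  using assms
  by (auto simp: scalar_prod_def mult_mat_vec_def conj_complex sum_distrib_right atLeast0LessThan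
      intro!: sum.cong)

lemma mult_vec_entry:
  fixes A :: "complex mat"
  assumes "A \<in> carrier_mat n n" "v \<in> carrier_vec n" "l < n"
  shows "(A *\<^sub>v v) $ l = (\<Sum>j<n. A $$ (l, j) * v $ j)"
  using assms by (auto simp: scalar_prod_def mult_mat_vec_def atLeast0LessThan intro!: sum.cong)

lemma count_ind: "lo \<le> hi \<Longrightarrow> (\<Sum>q<N. if lo \<le> q \<and> q < hi then 1 else 0) = min hi N - min lo (N::nat)"
  by (induction N) auto

lemma qbit_Suc: "qbit i (Suc q) = qbit (i div 2) q"
  unfolding qbit_def by (simp add: power_Suc div_mult2_eq)

lemma num_ones_Suc: "num_ones (Suc N) i = qbit i 0 + num_ones N (i div 2)"
  unfolding num_ones_def sum.lessThan_Suc_shift qbit_Suc ..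

lemma num_ones_2i: "num_ones (Suc N) (2 * i + b) = b + num_ones N i" if "b < 2"
  using that by (simp add: num_ones_Suc qbit_def)

lemma sum_2M:
  fixes h :: "nat \<Rightarrow> 'a::comm_monoid_add"
  shows "(\<Sum>i<2 * M. h i) = (\<Sum>i<M. h (2 * i) + h (2 * i + 1))"
proof (induction M)
  case (Suc M)
  have e: "2 * Suc M = Suc (Suc (2 * M))" by simp
  show ?case unfolding e using Suc by (simp add: ac_simps)
qed simp

lemma sum_pow2_split:
  fixes h :: "nat \<Rightarrow> 'a::comm_monoid_add"
  shows "(\<Sum>i<2 ^ Suc N. h i) = (\<Sum>i<2 ^ N. h (2 * i) + h (2 * i + 1))"
  using sum_2M[of h "2 ^ N"] by (simp add: power_Suc)

lemma weight_sum:
  fixes g :: "nat \<Rightarrow> real"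
  shows "(\<Sum>i<2 ^ N. g (num_ones N i)) = (\<Sum>k\<le>N. real (N choose k) * g k)"
proof (induction N arbitrary: g)
  case 0 then show ?case by (simp add: num_ones_def)
next
  case (Suc N)
  have "(\<Sum>i<2 ^ Suc N. g (num_ones (Suc N) i)) = (\<Sum>i<2 ^ N. g (num_ones N i) + g (Suc (num_ones N i)))"
    unfolding sum_pow2_split using num_ones_2i[of 0] num_ones_2i[of 1] by simp
  also have "\<dots> = (\<Sum>k\<le>N. real (N choose k) * g k) + (\<Sum>k\<le>N. real (N choose k) * g (Suc k))"
    unfolding sum.distrib using Suc.IH[of g] Suc.IH[of "\<lambda>k. g (Suc k)"] by simp
  also have "\<dots> = (\<Sum>k\<le>Suc N. real (Suc N choose k) * g k)"
  proof -
    have a: "(\<Sum>k\<le>Suc N. real (Suc N choose k) * g k)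
        = g 0 + (\<Sum>k\<le>N. real (Suc N choose Suc k) * g (Suc k))"
      by (subst sum.atMost_Suc_shift) simp
    have b: "(\<Sum>k\<le>N. real (N choose k) * g k) = g 0 + (\<Sum>k\<le>N. real (N choose Suc k) * g (Suc k))"
    proof -
      have "(\<Sum>k\<le>Suc N. real (N choose k) * g k) = g 0 + (\<Sum>k\<le>N. real (N choose Suc k) * g (Suc k))"
        by (subst sum.atMost_Suc_shift) simp
      then show ?thesis by (simp add: binomial_eq_0)
    qed
    show ?thesis unfolding a b by (simp add: sum.distrib algebra_simps)
  qed
  finally show ?case .
qed

context qs
begin

definition s :: real where "s = 1 / (2 * (4 + Z) ^ K)"

lemma s_pos: "s > 0" unfolding s_def using Zp by simp

definition Rf :: "nat \<Rightarrow> nat \<Rightarrow> real" where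
  "Rf x y = (if x = y then f (int K - int x) else 0)
     + \<sigma> * ((if x = 0 \<and> y = N then 1 else 0) + (if x = N \<and> y = 0 then 1 else 0))"

lemma Rf_diag: "Rf x x = f (int K - int x)"
  unfolding Rf_def using N_pos by auto

definition dmat :: "complex mat" where
  "dmat = msum (2 ^ N) (\<lambda>k. complex_of_real (real (N choose k) * f (int K - int k))
                 \<cdot>\<^sub>m ketbra (dicke N k) (dicke N k)) {0..N}"
definition odmat :: "complex mat" where
  "odmat = complex_of_real \<sigma> \<cdot>\<^sub>m (ketbra (dicke N 0) (dicke N N) + ketbra (dicke N N) (dicke N 0))"
definition rho :: "complex mat" where
  "rho = complex_of_real (1 / (2 * (4 + Z) ^ K)) \<cdot>\<^sub>m (dmat + odmat)"

lemma dicke_dim [simp]: "dim_vec (dicke N k) = 2 ^ N" unfolding dicke_def by simp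

lemma ketbra_carrier: "ketbra (dicke N k) (dicke N l) \<in> carrier_mat (2 ^ N) (2 ^ N)"
  unfolding ketbra_def by simp

lemma dmat_carrier: "dmat \<in> carrier_mat (2 ^ N) (2 ^ N)" unfolding dmat_def msum_def by simp
lemma odmat_carrier: "odmat \<in> carrier_mat (2 ^ N) (2 ^ N)" unfolding odmat_def using ketbra_carrier by simp
lemma rho_carrier: "rho \<in> carrier_mat (2 ^ N) (2 ^ N)" unfolding rho_def using dmat_carrier odmat_carrier by simp

lemma dicke_entry: "i < 2 ^ N \<Longrightarrow> dicke N k $ i = (if num_ones N i = k then complex_of_real (1 / sqrt (real (N choose k))) else 0)"
  unfolding dicke_def by simp

lemma dmat_entry:
  assumes i: "i < 2 ^ N" and j: "j < 2 ^ N"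
  shows "dmat $$ (i, j) = complex_of_real (if num_ones N i = num_ones N j then f (int K - int (num_ones N i)) else 0)"
proof -
  have tm: "(complex_of_real (real (N choose k) * f (int K - int k)) \<cdot>\<^sub>m ketbra (dicke N k) (dicke N k)) $$ (i, j)
      = (if k = num_ones N i then (if num_ones N j = num_ones N i then complex_of_real (f (int K - int k)) else 0) else 0)"
    if k: "k \<in> {0..N}" for k
  proof -
    have C: "real (N choose k) > 0" using k by simp
    have "(complex_of_real (1 / sqrt (real (N choose k)))) * cnj (complex_of_real (1 / sqrt (real (N choose k))))
        = complex_of_real (1 / real (N choose k))"
      using C by (simp flip: of_real_mult)
    moreover have "complex_of_real (real (N choose k) * x) / complex_of_nat (N choose k) = complex_of_real x" for x
    proof -
      have "complex_of_nat (N choose k) = complex_of_real (real (N choose k))" by simp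
      then show ?thesis using C by (simp del: of_real_of_nat_eq)
    qed
    ultimately show ?thesis using i j C
      by (auto simp: ketbra_def dicke_entry simp flip: of_real_mult)
  qed
  have "dmat $$ (i, j) = (\<Sum>k\<in>{0..N}. (complex_of_real (real (N choose k) * f (int K - int k)) \<cdot>\<^sub>m ketbra (dicke N k) (dicke N k)) $$ (i, j))"
    unfolding dmat_def msum_def using i j by simp
  also have "\<dots> = (\<Sum>k\<in>{0..N}. (if k = num_ones N i then (if num_ones N j = num_ones N i then complex_of_real (f (int K - int k)) else 0) else 0))"
    by (rule sum.cong[OF refl], erule tm)
  also have "\<dots> = complex_of_real (if num_ones N i = num_ones N j then f (int K - int (num_ones N i)) else 0)"
    using num_ones_le[of N i] by (simp add: sum.delta')
  finally show ?thesis .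
qed

lemma odmat_entry:
  assumes i: "i < 2 ^ N" and j: "j < 2 ^ N"
  shows "odmat $$ (i, j) = complex_of_real (\<sigma> * ((if num_ones N i = 0 \<and> num_ones N j = N then 1 else 0) + (if num_ones N i = N \<and> num_ones N j = 0 then 1 else 0)))"
  using i j N_pos by (auto simp: odmat_def ketbra_def dicke_entry ketbra_carrier)

lemma rho_entry:
  assumes i: "i < 2 ^ N" and j: "j < 2 ^ N"
  shows "rho $$ (i, j) = complex_of_real (s * Rf (num_ones N i) (num_ones N j))"
proof -
  have "rho $$ (i, j) = complex_of_real s * (dmat $$ (i, j) + odmat $$ (i, j))"
    unfolding rho_def s_def using i j dmat_carrier odmat_carrier by simp
  then show ?thesis unfolding dmat_entry[OF i j] odmat_entry[OF i j] Rf_def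
    by (simp flip: of_real_mult of_real_add)
qed

lemma ptrans_carrier: "ptrans N M A \<in> carrier_mat (2 ^ N) (2 ^ N)"
  unfolding ptrans_def by simp

lemma ptrans_entry:
  assumes i: "i < 2 ^ N" and j: "j < 2 ^ N"
  shows "ptrans N M A $$ (i, j) = A $$ (pt_index N M i j, pt_index N M j i)"
  unfolding ptrans_def using i j by simp

lemma rho_pt_entry:
  assumes i: "i < 2 ^ N" and j: "j < 2 ^ N"
  shows "ptrans N M rho $$ (i, j) = complex_of_real (s * Rf (mo N M j + mc N M i) (mo N M i + mc N M j))"
  unfolding ptrans_entry[OF i j] rho_entry[OF pt_lt pt_lt] num_ones_pt ..

lemma ptrans_empty: "ptrans N {} rho = rho"
proof (rule eq_matI)
  show "dim_row (ptrans N {} rho) = dim_row rho" "dim_col (ptrans N {} rho) = dim_col rho"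
    using rho_carrier by (auto simp: ptrans_def)
  fix i j assume "i < dim_row rho" "j < dim_col rho"
  then have "i < 2 ^ N" "j < 2 ^ N" using rho_carrier by auto
  then show "ptrans N {} rho $$ (i, j) = rho $$ (i, j)" by (simp add: ptrans_entry pt_empty)
qed

lemma trace_rho: "mtrace rho = 1"
proof -
  have "mtrace rho = (\<Sum>i<2 ^ N. complex_of_real (s * f (int K - int (num_ones N i))))"
    unfolding mtrace_def using rho_carrier by (simp add: rho_entry Rf_diag)
  also have "\<dots> = complex_of_real (s * (\<Sum>i<2 ^ N. f (int K - int (num_ones N i))))"
    by (simp add: sum_distrib_left)
  also have "(\<Sum>i<2 ^ N. f (int K - int (num_ones N i))) = 2 * (4 + Z) ^ K"
    using weight_sum[where g = "\<lambda>k. f (int K - int k)" and N = N] trace_sum by simp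
  finally show ?thesis unfolding s_def using Zp by simp
qed

definition R :: "nat \<Rightarrow> nat \<Rightarrow> nat \<Rightarrow> nat" where
  "R m p a = bv N (\<lambda>r. if r < p \<or> (m \<le> r \<and> r < m + a) then 1 else 0)"

lemma R_lt: "R m p a < 2 ^ N" unfolding R_def by (rule bv_lt) simp

lemma qbit_R: "q < N \<Longrightarrow> qbit (R m p a) q = (if q < p \<or> (m \<le> q \<and> q < m + a) then 1 else 0)"
  unfolding R_def by (rule qbit_bv) auto

lemma mo_R: assumes "p \<le> m" "m \<le> N" shows "mo N {..<m} (R m p a) = p"
proof -
  have "mo N {..<m} (R m p a) = (\<Sum>q<N. if 0 \<le> q \<and> q < p then 1 else 0)"
    unfolding mo_def using assms by (intro sum.cong) (auto simp: qbit_R)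
  also have "\<dots> = p" using count_ind[of 0 p N] assms by simp
  finally show ?thesis .
qed

lemma mc_R: assumes "p \<le> m" "m + a \<le> N" shows "mc N {..<m} (R m p a) = a"
proof -
  have "mc N {..<m} (R m p a) = (\<Sum>q<N. if m \<le> q \<and> q < m + a then 1 else 0)"
    unfolding mc_def using assms by (intro sum.cong) (auto simp: qbit_R)
  also have "\<dots> = a" using count_ind[of m "m + a" N] assms by simp
  finally show ?thesis .
qed

lemma num_ones_R: assumes "p \<le> m" "m + a \<le> N" shows "num_ones N (R m p a) = p + a"
  using num_ones_mo_mc[of N _ "{..<m}"] mo_R[of p m] mc_R[OF assms] assms by simp

end


lemma class_sum:
  fixes h :: "nat \<Rightarrow> int" and x :: "nat \<Rightarrow> complex"
  assumes fD: "finite D" and hD: "h ` I \<subseteq> D" and fI: "finite I"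
  shows "(\<Sum>i\<in>I. \<Sum>j\<in>I. if h i = h j then x j * cnj (x i) else 0)
       = (\<Sum>\<delta>\<in>D. complex_of_real ((cmod (\<Sum>i\<in>{i\<in>I. h i = \<delta>}. x i))\<^sup>2))"
proof -
  define S where "S \<delta> = (\<Sum>i\<in>{i\<in>I. h i = \<delta>}. x i)" for \<delta>
  have "(\<Sum>i\<in>I. \<Sum>j\<in>I. if h i = h j then x j * cnj (x i) else 0) = (\<Sum>i\<in>I. cnj (x i) * S (h i))"
  proof (rule sum.cong[OF refl])
    fix i assume "i \<in> I"
    have "(\<Sum>j\<in>I. if h i = h j then x j * cnj (x i) else 0) = (\<Sum>j\<in>{j\<in>I. h j = h i}. x j * cnj (x i))"
      using fI by (subst sum.inter_filter) (auto intro!: sum.cong)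
    also have "\<dots> = cnj (x i) * S (h i)" unfolding S_def by (simp add: sum_distrib_left mult.commute)
    finally show "(\<Sum>j\<in>I. if h i = h j then x j * cnj (x i) else 0) = cnj (x i) * S (h i)" .
  qed
  also have "\<dots> = (\<Sum>\<delta>\<in>D. \<Sum>i\<in>{i. i \<in> I \<and> h i = \<delta>}. cnj (x i) * S (h i))"
    by (rule sum.group[OF fI fD hD, symmetric])
  also have "\<dots> = (\<Sum>\<delta>\<in>D. S \<delta> * cnj (S \<delta>))"
  proof (rule sum.cong[OF refl])
    fix \<delta>
    have "(\<Sum>i\<in>{i. i \<in> I \<and> h i = \<delta>}. cnj (x i) * S (h i)) = (\<Sum>i\<in>{i. i \<in> I \<and> h i = \<delta>}. cnj (x i) * S \<delta>)"
      by (rule sum.cong) auto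
    also have "\<dots> = (\<Sum>i\<in>{i. i \<in> I \<and> h i = \<delta>}. cnj (x i)) * S \<delta>"
      by (rule sum_distrib_right[symmetric])
    also have "(\<Sum>i\<in>{i. i \<in> I \<and> h i = \<delta>}. cnj (x i)) = cnj (S \<delta>)" unfolding S_def by simp
    also have "cnj (S \<delta>) * S \<delta> = S \<delta> * cnj (S \<delta>)" by (rule mult.commute)
    finally show "(\<Sum>i\<in>{i. i \<in> I \<and> h i = \<delta>}. cnj (x i) * S (h i)) = S \<delta> * cnj (S \<delta>)" .
  qed
  also have "\<dots> = (\<Sum>\<delta>\<in>D. complex_of_real ((cmod (S \<delta>))\<^sup>2))"
    by (simp only: complex_norm_square)
  finally show ?thesis unfolding S_def .
qed

lemma sum_two_le:
  fixes g :: "int \<Rightarrow> real"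
  assumes "finite D" "a \<in> D" "b \<in> D" "a \<noteq> b" "\<And>x. g x \<ge> 0"
  shows "g a + g b \<le> sum g D"
proof -
  have "sum g D = g a + sum g (D - {a})" using assms by (simp add: sum.remove)
  also have "sum g (D - {a}) = g b + sum g (D - {a} - {b})" using assms by (simp add: sum.remove)
  finally show ?thesis using assms by (simp add: sum_nonneg)
qed

lemma pair_sum:
  fixes v :: "nat \<Rightarrow> complex"
  assumes "finite I"
  shows "(\<Sum>i\<in>I. \<Sum>j\<in>I. if P i \<and> Q j then v j * cnj (v i) else 0)
    = cnj (\<Sum>i\<in>{i\<in>I. P i}. v i) * (\<Sum>j\<in>{j\<in>I. Q j}. v j)"
proof -
  have "(\<Sum>i\<in>I. \<Sum>j\<in>I. if P i \<and> Q j then v j * cnj (v i) else 0)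
      = (\<Sum>i\<in>I. if P i then cnj (v i) * (\<Sum>j\<in>{j\<in>I. Q j}. v j) else 0)"
    using assms by (intro sum.cong refl) (auto simp: sum.inter_filter[symmetric] sum_distrib_left mult.commute)
  also have "\<dots> = cnj (\<Sum>i\<in>{i\<in>I. P i}. v i) * (\<Sum>j\<in>{j\<in>I. Q j}. v j)"
    using assms by (simp add: sum.inter_filter[symmetric] sum_distrib_right)
  finally show ?thesis .
qed

context qs
begin

lemma msz_le: "msz N M \<le> N"
proof -
  have "msz N M \<le> (\<Sum>q<N. 1)" unfolding msz_def by (rule sum_mono) auto
  then show ?thesis by simp
qed

definition cA :: real where "cA = exp (real N * mu) / (2 * cosh mu)"
definition cB :: real where "cB = exp (- (real N * mu)) / (2 * cosh mu)"

lemma cA_pos: "cA > 0" unfolding cA_def by simp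
lemma cB_pos: "cB > 0" unfolding cB_def by simp

lemma f_split:
  assumes "2 * x = wi + wj"
  shows "f (int K - int x) = cA * exp (- (real wi * mu)) * exp (- (real wj * mu)) + cB * exp (real wi * mu) * exp (real wj * mu)"
proof -
  have e: "(2 * real_of_int (int K - int x) + 1) * mu = real N * mu - real wi * mu - real wj * mu"
  proof -
    have "2 * real x = real wi + real wj" using assms by (metis of_nat_add of_nat_mult of_nat_numeral)
    then show ?thesis using NK by (simp add: algebra_simps)
  qed
  have "f (int K - int x) = (exp (real N * mu - real wi * mu - real wj * mu) + exp (- (real N * mu - real wi * mu - real wj * mu))) / (2 * cosh mu)"
    unfolding f_closed F_def e by (simp add: cosh_def)
  also have "\<dots> = cA * exp (- (real wi * mu)) * exp (- (real wj * mu)) + cB * exp (real wi * mu) * exp (real wj * mu)"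
    unfolding cA_def cB_def by (simp add: exp_diff exp_add exp_minus field_simps)
  finally show ?thesis .
qed

lemma coef_f: "cA * exp (- (real x * mu)) ^ 2 + cB * exp (real x * mu) ^ 2 = f (int K - int x)"
  using f_split[of x x x] by (simp add: power2_eq_square mult.assoc)

lemma f_refl: "x \<le> N \<Longrightarrow> f (int K - int (N - x)) = f (int K - int x)"
  using f_sym[of "int K - int x"] NK by (simp add: of_nat_diff algebra_simps)

lemma re_bound:
  fixes T1 T2 :: complex and c :: real
  assumes "c \<ge> 1"
  shows "c * (cmod T1)\<^sup>2 + c * (cmod T2)\<^sup>2 + 2 * \<sigma> * Re (cnj T1 * T2) \<ge> 0"
proof -
  have "\<bar>Re (cnj T1 * T2)\<bar> \<le> cmod T1 * cmod T2"
    using abs_Re_le_cmod[of "cnj T1 * T2"] by (simp add: norm_mult)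
  then have "\<bar>2 * \<sigma> * Re (cnj T1 * T2)\<bar> \<le> 2 * cmod T1 * cmod T2"
    using sig_abs by (simp add: abs_mult)
  moreover have "2 * cmod T1 * cmod T2 \<le> (cmod T1)\<^sup>2 + (cmod T2)\<^sup>2"
  proof -
    have "0 \<le> (cmod T1 - cmod T2)\<^sup>2" by simp
    then show ?thesis by (simp add: power2_diff)
  qed
  moreover have "(cmod T1)\<^sup>2 \<le> c * (cmod T1)\<^sup>2" "(cmod T2)\<^sup>2 \<le> c * (cmod T2)\<^sup>2"
    using assms by (simp_all add: mult_le_cancel_right1)
  ultimately show ?thesis by linarith
qed

definition dd :: "nat set \<Rightarrow> nat \<Rightarrow> int" where
  "dd M i = int (mc N M i) - int (mo N M i)"

lemma psd_pt: "psd (2 ^ N) (ptrans N M rho)"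
  unfolding psd_def
proof (intro conjI ballI)
  show "ptrans N M rho \<in> carrier_mat (2 ^ N) (2 ^ N)" by (rule ptrans_carrier)
  fix v :: "complex vec" assume v: "v \<in> carrier_vec (2 ^ N)"
  define n where "n = (2::nat) ^ N"
  define m' where "m' = msz N M"
  define I where "I = {..<n}"
  define w where "w i = num_ones N i" for i
  define a where "a i = exp (- (real (w i) * mu))" for i
  define b where "b i = exp (real (w i) * mu)" for i
  define xa where "xa i = complex_of_real (a i) * v $ i" for i
  define xb where "xb i = complex_of_real (b i) * v $ i" for i
  define E1 where "E1 i \<longleftrightarrow> mo N M i = m' \<and> mc N M i = 0" for i
  define E2 where "E2 i \<longleftrightarrow> mo N M i = 0 \<and> mc N M i = N - m'" for i
  define T1 where "T1 = (\<Sum>i\<in>{i\<in>I. E1 i}. v $ i)"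
  define T2 where "T2 = (\<Sum>i\<in>{i\<in>I. E2 i}. v $ i)"
  have m'N: "m' \<le> N" unfolding m'_def by (rule msz_le)
  have moB: "mo N M i \<le> m'" for i unfolding m'_def by (rule mo_le)
  have mcB: "mc N M i \<le> N - m'" for i unfolding m'_def by (rule mc_le)
  have E1d: "E1 i \<longleftrightarrow> dd M i = - int m'" for i
    unfolding E1_def dd_def using moB[of i] by auto
  have E2d: "E2 i \<longleftrightarrow> dd M i = int N - int m'" for i
    unfolding E2_def dd_def using mcB[of i] m'N by auto
  have E1w: "E1 i \<Longrightarrow> w i = m'" for i unfolding E1_def w_def num_ones_mo_mc[of N i M] by simp
  have E2w: "E2 i \<Longrightarrow> w i = N - m'" for i unfolding E2_def w_def num_ones_mo_mc[of N i M] by simp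
  have ex12: "\<not> (E1 i \<and> E2 i)" for i unfolding E1_def E2_def using N_pos by auto
  have entry: "ptrans N M rho $$ (i, j) * v $ j * cnj (v $ i)
      = complex_of_real s * (complex_of_real cA * (if dd M i = dd M j then xa j * cnj (xa i) else 0)
         + complex_of_real cB * (if dd M i = dd M j then xb j * cnj (xb i) else 0)
         + complex_of_real \<sigma> * ((if E1 i \<and> E2 j then v $ j * cnj (v $ i) else 0)
                               + (if E2 i \<and> E1 j then v $ j * cnj (v $ i) else 0)))"
    if i: "i \<in> I" and j: "j \<in> I" for i j
  proof -
    have il: "i < 2 ^ N" and jl: "j < 2 ^ N" using i j unfolding I_def n_def by auto
    have c1: "(mo N M j + mc N M i = 0 \<and> mo N M i + mc N M j = N) \<longleftrightarrow> E1 i \<and> E2 j"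
      unfolding E1_def E2_def using moB[of i] mcB[of j] m'N by auto
    have c2: "(mo N M j + mc N M i = N \<and> mo N M i + mc N M j = 0) \<longleftrightarrow> E2 i \<and> E1 j"
      unfolding E1_def E2_def using moB[of j] mcB[of i] m'N by auto
    have c3: "(mo N M j + mc N M i = mo N M i + mc N M j) \<longleftrightarrow> dd M i = dd M j"
      unfolding dd_def by auto
    have dg: "(if mo N M j + mc N M i = mo N M i + mc N M j then f (int K - int (mo N M j + mc N M i)) else 0)
        = (if dd M i = dd M j then cA * a i * a j + cB * b i * b j else 0)"
    proof (cases "dd M i = dd M j")
      case True
      then have "2 * (mo N M j + mc N M i) = w i + w j"
        unfolding dd_def w_def num_ones_mo_mc[of N _ M] by presburger
      then have fx: "f (int K - int (mo N M j + mc N M i)) = cA * a i * a j + cB * b i * b j"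
        using f_split[OF \<open>2 * (mo N M j + mc N M i) = w i + w j\<close>] unfolding a_def b_def by (simp only: mult.assoc)
      have P: "mo N M j + mc N M i = mo N M i + mc N M j" using c3 True by simp
      show ?thesis unfolding if_P[OF P] if_P[OF True] by (rule fx)
    qed (use c3 in simp)
    have rf: "Rf (mo N M j + mc N M i) (mo N M i + mc N M j)
       = (if dd M i = dd M j then cA * a i * a j + cB * b i * b j else 0)
         + \<sigma> * ((if E1 i \<and> E2 j then 1 else 0) + (if E2 i \<and> E1 j then 1 else 0))"
      unfolding Rf_def dg c1 c2 ..
    show ?thesis
      unfolding rho_pt_entry[OF il jl] rf xa_def xb_def
      using ex12[of i] ex12[of j]
      by (cases "dd M i = dd M j"; cases "E1 i \<and> E2 j"; cases "E2 i \<and> E1 j") (auto simp: algebra_simps)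
  qed
  have fI: "finite I" unfolding I_def by simp
  define D where "D = {- int N..int N}"
  have fD: "finite D" unfolding D_def by simp
  have hD: "dd M ` I \<subseteq> D"
  proof
    fix x assume "x \<in> dd M ` I"
    then obtain i where "x = dd M i" by auto
    then show "x \<in> D" unfolding D_def dd_def using moB[of i] mcB[of i] m'N by auto
  qed
  define Sa where "Sa \<delta> = (\<Sum>i\<in>{i\<in>I. dd M i = \<delta>}. xa i)" for \<delta>
  define Sb where "Sb \<delta> = (\<Sum>i\<in>{i\<in>I. dd M i = \<delta>}. xb i)" for \<delta>
  have Q: "(ptrans N M rho *\<^sub>v v) \<bullet>c v = complex_of_real (s * (cA * (\<Sum>\<delta>\<in>D. (cmod (Sa \<delta>))\<^sup>2)
      + cB * (\<Sum>\<delta>\<in>D. (cmod (Sb \<delta>))\<^sup>2) + \<sigma> * (2 * Re (cnj T1 * T2))))"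
  proof -
    have "(ptrans N M rho *\<^sub>v v) \<bullet>c v = (\<Sum>i\<in>I. \<Sum>j\<in>I. ptrans N M rho $$ (i, j) * v $ j * cnj (v $ i))"
      unfolding I_def n_def by (rule qform_sum[OF ptrans_carrier v])
    also have "\<dots> = (\<Sum>i\<in>I. \<Sum>j\<in>I. complex_of_real s * (complex_of_real cA * (if dd M i = dd M j then xa j * cnj (xa i) else 0)
         + complex_of_real cB * (if dd M i = dd M j then xb j * cnj (xb i) else 0)
         + complex_of_real \<sigma> * ((if E1 i \<and> E2 j then v $ j * cnj (v $ i) else 0)
                               + (if E2 i \<and> E1 j then v $ j * cnj (v $ i) else 0))))"
      by (intro sum.cong refl) (simp add: entry)
    also have "\<dots> = complex_of_real s * (complex_of_real cA * (\<Sum>i\<in>I. \<Sum>j\<in>I. if dd M i = dd M j then xa j * cnj (xa i) else 0)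
         + complex_of_real cB * (\<Sum>i\<in>I. \<Sum>j\<in>I. if dd M i = dd M j then xb j * cnj (xb i) else 0)
         + complex_of_real \<sigma> * ((\<Sum>i\<in>I. \<Sum>j\<in>I. if E1 i \<and> E2 j then v $ j * cnj (v $ i) else 0)
                               + (\<Sum>i\<in>I. \<Sum>j\<in>I. if E2 i \<and> E1 j then v $ j * cnj (v $ i) else 0)))"
      by (simp only: sum.distrib sum_distrib_left distrib_left)
    also have "\<dots> = complex_of_real s * (complex_of_real cA * (\<Sum>\<delta>\<in>D. complex_of_real ((cmod (Sa \<delta>))\<^sup>2))
         + complex_of_real cB * (\<Sum>\<delta>\<in>D. complex_of_real ((cmod (Sb \<delta>))\<^sup>2))
         + complex_of_real \<sigma> * (cnj T1 * T2 + cnj T2 * T1))"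
      unfolding class_sum[OF fD hD fI] pair_sum[OF fI] Sa_def Sb_def T1_def T2_def ..
    also have "cnj T1 * T2 + cnj T2 * T1 = complex_of_real (2 * Re (cnj T1 * T2))"
    proof -
      have "cnj T2 * T1 = cnj (cnj T1 * T2)" by simp
      then show ?thesis by (simp only: complex_add_cnj)
    qed
    finally show ?thesis by simp
  qed
  have SaE1: "Sa (- int m') = complex_of_real (exp (- (real m' * mu))) * T1"
    unfolding Sa_def T1_def xa_def a_def sum_distrib_left
    by (intro sum.cong) (auto simp: E1d[symmetric] E1w)
  have SbE1: "Sb (- int m') = complex_of_real (exp (real m' * mu)) * T1"
    unfolding Sb_def T1_def xb_def b_def sum_distrib_left
    by (intro sum.cong) (auto simp: E1d[symmetric] E1w)
  have SaE2: "Sa (int N - int m') = complex_of_real (exp (- (real (N - m') * mu))) * T2"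
    unfolding Sa_def T2_def xa_def a_def sum_distrib_left
    by (intro sum.cong) (auto simp: E2d[symmetric] E2w)
  have SbE2: "Sb (int N - int m') = complex_of_real (exp (real (N - m') * mu)) * T2"
    unfolding Sb_def T2_def xb_def b_def sum_distrib_left
    by (intro sum.cong) (auto simp: E2d[symmetric] E2w)
  have inD: "- int m' \<in> D" "int N - int m' \<in> D" "- int m' \<noteq> int N - int m'"
    unfolding D_def using m'N N_pos by auto
  have lowA: "(cmod (Sa (- int m')))\<^sup>2 + (cmod (Sa (int N - int m')))\<^sup>2 \<le> (\<Sum>\<delta>\<in>D. (cmod (Sa \<delta>))\<^sup>2)"
    by (rule sum_two_le[OF fD inD]) simp
  have lowB: "(cmod (Sb (- int m')))\<^sup>2 + (cmod (Sb (int N - int m')))\<^sup>2 \<le> (\<Sum>\<delta>\<in>D. (cmod (Sb \<delta>))\<^sup>2)"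
    by (rule sum_two_le[OF fD inD]) simp
  define c where "c = f (int K - int m')"
  have c1: "c \<ge> 1" unfolding c_def by (rule f_ge1)
  have cf1: "cA * exp (- (real m' * mu)) ^ 2 + cB * exp (real m' * mu) ^ 2 = c"
    unfolding c_def by (rule coef_f)
  have cf2: "cA * exp (- (real (N - m') * mu)) ^ 2 + cB * exp (real (N - m') * mu) ^ 2 = c"
    unfolding c_def using coef_f[of "N - m'"] f_refl[OF m'N] by simp
  have "cA * ((cmod (Sa (- int m')))\<^sup>2 + (cmod (Sa (int N - int m')))\<^sup>2)
      + cB * ((cmod (Sb (- int m')))\<^sup>2 + (cmod (Sb (int N - int m')))\<^sup>2)
      = c * (cmod T1)\<^sup>2 + c * (cmod T2)\<^sup>2"
  proof -
    have "cA * ((cmod (Sa (- int m')))\<^sup>2 + (cmod (Sa (int N - int m')))\<^sup>2)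
      + cB * ((cmod (Sb (- int m')))\<^sup>2 + (cmod (Sb (int N - int m')))\<^sup>2)
      = (cA * exp (- (real m' * mu)) ^ 2 + cB * exp (real m' * mu) ^ 2) * (cmod T1)\<^sup>2
        + (cA * exp (- (real (N - m') * mu)) ^ 2 + cB * exp (real (N - m') * mu) ^ 2) * (cmod T2)\<^sup>2"
    unfolding SaE1 SbE1 SaE2 SbE2
    by (simp add: norm_mult power_mult_distrib algebra_simps)
    also have "\<dots> = c * (cmod T1)\<^sup>2 + c * (cmod T2)\<^sup>2" unfolding cf1 cf2 ..
    finally show ?thesis .
  qed
  moreover have "cA * ((cmod (Sa (- int m')))\<^sup>2 + (cmod (Sa (int N - int m')))\<^sup>2) \<le> cA * (\<Sum>\<delta>\<in>D. (cmod (Sa \<delta>))\<^sup>2)"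
    using lowA cA_pos by simp
  moreover have "cB * ((cmod (Sb (- int m')))\<^sup>2 + (cmod (Sb (int N - int m')))\<^sup>2) \<le> cB * (\<Sum>\<delta>\<in>D. (cmod (Sb \<delta>))\<^sup>2)"
    using lowB cB_pos by simp
  moreover have "c * (cmod T1)\<^sup>2 + c * (cmod T2)\<^sup>2 + 2 * \<sigma> * Re (cnj T1 * T2) \<ge> 0"
    by (rule re_bound[OF c1])
  ultimately have nn: "cA * (\<Sum>\<delta>\<in>D. (cmod (Sa \<delta>))\<^sup>2) + cB * (\<Sum>\<delta>\<in>D. (cmod (Sb \<delta>))\<^sup>2) + \<sigma> * (2 * Re (cnj T1 * T2)) \<ge> 0"
    by linarith
  show "Im ((ptrans N M rho *\<^sub>v v) \<bullet>c v) = 0" unfolding Q by simp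
  show "0 \<le> Re ((ptrans N M rho *\<^sub>v v) \<bullet>c v)" unfolding Q using s_pos nn by simp
qed

lemma density_rho: "density (2 ^ N) rho"
  unfolding density_def using psd_pt[of "{}"] ptrans_empty trace_rho by simp

lemma ppt_rho: "ppt_all N rho"
  unfolding ppt_all_def using psd_pt by simp

end


lemma qexp:
  fixes X :: "complex mat" and v w :: "nat \<Rightarrow> complex"
  shows "(\<Sum>i<n. \<Sum>j<n. X $$ (i, j) * (v j + z * w j) * cnj (v i + z * w i))
    = (\<Sum>i<n. \<Sum>j<n. X $$ (i, j) * v j * cnj (v i))
      + z * (\<Sum>i<n. \<Sum>j<n. X $$ (i, j) * w j * cnj (v i))
      + cnj z * (\<Sum>i<n. \<Sum>j<n. X $$ (i, j) * v j * cnj (w i))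
      + z * cnj z * (\<Sum>i<n. \<Sum>j<n. X $$ (i, j) * w j * cnj (w i))"
proof -
  have tm: "X $$ (i, j) * (v j + z * w j) * cnj (v i + z * w i)
     = X $$ (i, j) * v j * cnj (v i) + z * (X $$ (i, j) * w j * cnj (v i))
       + cnj z * (X $$ (i, j) * v j * cnj (w i)) + z * cnj z * (X $$ (i, j) * w j * cnj (w i))" for i j
    by (simp add: algebra_simps)
  show ?thesis unfolding tm by (simp add: sum.distrib sum_distrib_left)
qed

lemma psd_kernel:
  fixes X :: "complex mat"
  assumes X: "psd n X" and v: "v \<in> carrier_vec n" and q0: "(X *\<^sub>v v) \<bullet>c v = 0"
  shows "X *\<^sub>v v = 0\<^sub>v n"
proof -
  have Xc: "X \<in> carrier_mat n n" using X unfolding psd_def by simp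
  define w where "w = X *\<^sub>v v"
  have wc: "w \<in> carrier_vec n" unfolding w_def using Xc v by simp
  define Q where "Q vv = (\<Sum>i<n. \<Sum>j<n. X $$ (i, j) * vv j * cnj (vv i))" for vv :: "nat \<Rightarrow> complex"
  have Qpsd: "Im (Q vv) = 0 \<and> Re (Q vv) \<ge> 0" for vv
  proof -
    have "vec n vv \<in> carrier_vec n" by simp
    then have "Im ((X *\<^sub>v vec n vv) \<bullet>c vec n vv) = 0 \<and> Re ((X *\<^sub>v vec n vv) \<bullet>c vec n vv) \<ge> 0"
      using X unfolding psd_def by blast
    moreover have "(X *\<^sub>v vec n vv) \<bullet>c vec n vv = Q vv"
      unfolding qform_sum[OF Xc vec_carrier] Q_def by (intro sum.cong refl) simp
    ultimately show ?thesis by simp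
  qed
  define vf where "vf i = v $ i" for i
  define wf where "wf i = w $ i" for i
  have Qv: "Q vf = 0" using q0 unfolding Q_def vf_def qform_sum[OF Xc v, symmetric] .
  define c where "c = (\<Sum>i<n. \<Sum>j<n. X $$ (i, j) * wf j * cnj (vf i))"
  define nn where "nn = (\<Sum>i<n. wf i * cnj (wf i))"
  have nn_eq: "(\<Sum>i<n. \<Sum>j<n. X $$ (i, j) * vf j * cnj (wf i)) = nn"
  proof -
    have "wf i = (\<Sum>j<n. X $$ (i, j) * vf j)" if "i < n" for i
      unfolding wf_def w_def vf_def using mult_vec_entry[OF Xc v that] .
    then show ?thesis unfolding nn_def by (auto simp: sum_distrib_right intro!: sum.cong)
  qed
  have nn_real: "nn = complex_of_real (\<Sum>i<n. (cmod (wf i))\<^sup>2)"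
    unfolding nn_def of_real_sum by (simp only: complex_norm_square)
  define r where "r = (\<Sum>i<n. (cmod (wf i))\<^sup>2)"
  have r0: "r \<ge> 0" unfolding r_def by (simp add: sum_nonneg)
  define qw where "qw = Q wf"
  have qw: "Im qw = 0" "Re qw \<ge> 0" using Qpsd[of wf] unfolding qw_def by auto
  have expand0: "Q (\<lambda>i. vf i + z * wf i) = Q vf + z * c + cnj z * (\<Sum>i<n. \<Sum>j<n. X $$ (i, j) * vf j * cnj (wf i)) + z * cnj z * Q wf" for z
    unfolding Q_def c_def by (rule qexp)
  have expand: "Q (\<lambda>i. vf i + z * wf i) = z * c + cnj z * nn + z * cnj z * qw" for z
    unfolding expand0 Qv nn_eq qw_def by simp
  have "Im (Q (\<lambda>i. vf i + 1 * wf i)) = 0" using Qpsd by blast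
  then have imc: "Im c = 0" unfolding expand nn_real qw_def[symmetric] using qw by simp
  have "Im (Q (\<lambda>i. vf i + \<i> * wf i)) = 0" using Qpsd by blast
  then have rec: "Re c = r" unfolding expand nn_real r_def[symmetric] using qw by simp
  have "r = 0"
  proof (rule ccontr)
    assume "r \<noteq> 0"
    then have rp: "r > 0" using r0 by simp
    define t where "t = r / (Re qw + 1)"
    have tp: "t > 0" unfolding t_def using rp qw by simp
    have "Re (Q (\<lambda>i. vf i + complex_of_real (- t) * wf i)) \<ge> 0" using Qpsd by blast
    then have "- t * Re c - t * r + t * t * Re qw \<ge> 0"
      unfolding expand nn_real r_def[symmetric] by simp
    then have "t * (t * Re qw - 2 * r) \<ge> 0" unfolding rec by (simp add: algebra_simps)
    then have "t * Re qw \<ge> 2 * r" using tp by (simp add: zero_le_mult_iff)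
    moreover have "t * Re qw < r"
    proof -
      have "t * Re qw = r * (Re qw / (Re qw + 1))" unfolding t_def using qw by simp
      also have "\<dots> < r * 1" using rp qw by (intro mult_strict_left_mono) auto
      finally show ?thesis by simp
    qed
    ultimately show False using rp by simp
  qed
  then have "\<forall>i\<in>{..<n}. (cmod (wf i))\<^sup>2 = 0"
    unfolding r_def by (subst sum_nonneg_eq_0_iff[symmetric]) auto
  then have "\<And>i. i < n \<Longrightarrow> w $ i = 0" unfolding wf_def by simp
  then show ?thesis unfolding w_def[symmetric] using wc by (intro eq_vecI) auto
qed

definition spv :: "nat \<Rightarrow> nat \<Rightarrow> (nat \<Rightarrow> nat) \<Rightarrow> (nat \<Rightarrow> complex) \<Rightarrow> complex vec" where
  "spv n r a c = vec n (\<lambda>i. \<Sum>k<r. if a k = i then c k else 0)"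

lemma spv_mult:
  fixes X :: "complex mat"
  assumes X: "X \<in> carrier_mat n n" and a: "\<And>k. k < r \<Longrightarrow> a k < n" and l: "l < n"
  shows "(X *\<^sub>v spv n r a c) $ l = (\<Sum>k<r. X $$ (l, a k) * c k)"
proof -
  have "(X *\<^sub>v spv n r a c) $ l = (\<Sum>j<n. X $$ (l, j) * (\<Sum>k<r. if a k = j then c k else 0))"
    using mult_vec_entry[OF X _ l, of "spv n r a c"] unfolding spv_def by simp
  also have "\<dots> = (\<Sum>j<n. \<Sum>k<r. if a k = j then X $$ (l, j) * c k else 0)"
    by (intro sum.cong refl) (auto simp: sum_distrib_left intro!: sum.cong)
  also have "\<dots> = (\<Sum>k<r. \<Sum>j<n. if a k = j then X $$ (l, j) * c k else 0)"
    by (rule sum.swap)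
  also have "\<dots> = (\<Sum>k<r. X $$ (l, a k) * c k)"
    using a by (intro sum.cong refl) (simp add: sum.delta)
  finally show ?thesis .
qed

lemma spv_q:
  fixes X :: "complex mat"
  assumes X: "X \<in> carrier_mat n n" and a: "\<And>k. k < r \<Longrightarrow> a k < n"
  shows "(X *\<^sub>v spv n r a c) \<bullet>c spv n r a c = (\<Sum>k'<r. \<Sum>k<r. X $$ (a k', a k) * c k * cnj (c k'))"
proof -
  define u where "u = X *\<^sub>v spv n r a c"
  have sc: "spv n r a c \<in> carrier_vec n" unfolding spv_def by simp
  have uc: "u \<in> carrier_vec n" unfolding u_def using X sc by simp
  have "u \<bullet>c spv n r a c = (\<Sum>i<n. u $ i * cnj (spv n r a c $ i))"
    using uc sc by (simp add: scalar_prod_def conj_complex atLeast0LessThan)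
  also have "\<dots> = (\<Sum>i<n. \<Sum>k'<r. if a k' = i then u $ i * cnj (c k') else 0)"
    by (intro sum.cong refl) (auto simp: spv_def sum_distrib_left intro!: sum.cong)
  also have "\<dots> = (\<Sum>k'<r. \<Sum>i<n. if a k' = i then u $ i * cnj (c k') else 0)"
    by (rule sum.swap)
  also have "\<dots> = (\<Sum>k'<r. u $ a k' * cnj (c k'))"
    using a by (intro sum.cong refl) (simp add: sum.delta)
  also have "\<dots> = (\<Sum>k'<r. (\<Sum>k<r. X $$ (a k', a k) * c k) * cnj (c k'))"
    unfolding u_def using a by (intro sum.cong refl) (simp add: spv_mult[OF X a])
  also have "\<dots> = (\<Sum>k'<r. \<Sum>k<r. X $$ (a k', a k) * c k * cnj (c k'))"
    by (simp add: sum_distrib_right)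
  finally show ?thesis unfolding u_def .
qed


context qs
begin

lemma KT:
  fixes r :: nat and a :: "nat \<Rightarrow> nat" and c :: "nat \<Rightarrow> complex"
  assumes A: "A \<in> ppt_states N" and B: "B \<in> ppt_states N" and t: "0 < t" "t < 1"
    and eq: "rho = complex_of_real t \<cdot>\<^sub>m A + complex_of_real (1 - t) \<cdot>\<^sub>m B"
    and M: "M \<subseteq> {..<N}" and a: "\<And>k. k < r \<Longrightarrow> a k < 2 ^ N"
    and q0: "(\<Sum>k'<r. \<Sum>k<r. ptrans N M rho $$ (a k', a k) * c k * cnj (c k')) = 0"
    and l: "l < 2 ^ N"
  shows "(\<Sum>k<r. ptrans N M A $$ (l, a k) * c k) = 0"
proof -
  have Ac: "A \<in> carrier_mat (2 ^ N) (2 ^ N)" and Bc: "B \<in> carrier_mat (2 ^ N) (2 ^ N)"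
    using A B unfolding ppt_states_def density_def psd_def by auto
  have pA: "psd (2 ^ N) (ptrans N M A)" and pB: "psd (2 ^ N) (ptrans N M B)"
    using A B M unfolding ppt_states_def ppt_all_def by auto
  have ent: "ptrans N M rho $$ (i, j) = complex_of_real t * ptrans N M A $$ (i, j) + complex_of_real (1 - t) * ptrans N M B $$ (i, j)"
    if "i < 2 ^ N" "j < 2 ^ N" for i j
    using that pt_lt[of N M i j] pt_lt[of N M j i] Ac Bc unfolding ptrans_entry[OF that] eq by simp
  define v where "v = spv (2 ^ N) r a c"
  have vc: "v \<in> carrier_vec (2 ^ N)" unfolding v_def spv_def by simp
  define qA where "qA = (\<Sum>k'<r. \<Sum>k<r. ptrans N M A $$ (a k', a k) * c k * cnj (c k'))"
  define qB where "qB = (\<Sum>k'<r. \<Sum>k<r. ptrans N M B $$ (a k', a k) * c k * cnj (c k'))"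
  have qAv: "(ptrans N M A *\<^sub>v v) \<bullet>c v = qA" unfolding qA_def v_def by (rule spv_q[OF ptrans_carrier a])
  have qBv: "(ptrans N M B *\<^sub>v v) \<bullet>c v = qB" unfolding qB_def v_def by (rule spv_q[OF ptrans_carrier a])
  have "(\<Sum>k'<r. \<Sum>k<r. ptrans N M rho $$ (a k', a k) * c k * cnj (c k'))
      = (\<Sum>k'<r. \<Sum>k<r. complex_of_real t * (ptrans N M A $$ (a k', a k) * c k * cnj (c k'))
          + complex_of_real (1 - t) * (ptrans N M B $$ (a k', a k) * c k * cnj (c k')))"
    by (intro sum.cong refl) (simp add: ent a algebra_simps)
  also have "\<dots> = complex_of_real t * qA + complex_of_real (1 - t) * qB"
    unfolding qA_def qB_def by (simp only: sum.distrib sum_distrib_left)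
  finally have "0 = complex_of_real t * qA + complex_of_real (1 - t) * qB" using q0 by simp
  moreover have "Im qA = 0" "Re qA \<ge> 0" "Im qB = 0" "Re qB \<ge> 0"
    using pA pB vc unfolding psd_def qAv[symmetric] qBv[symmetric] by auto
  ultimately have "Re qA = 0"
  proof -
    assume z: "0 = complex_of_real t * qA + complex_of_real (1 - t) * qB"
      and nn: "Im qA = 0" "Re qA \<ge> 0" "Im qB = 0" "Re qB \<ge> 0"
    have "0 = t * Re qA + (1 - t) * Re qB" using arg_cong[OF z, of Re] by simp
    moreover have "t * Re qA \<ge> 0" "(1 - t) * Re qB \<ge> 0" using nn t by simp_all
    ultimately have "t * Re qA = 0" by linarith
    then show ?thesis using t by simp
  qed
  then have "qA = 0" using \<open>Im qA = 0\<close> by (simp add: complex_eq_iff)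
  then have "ptrans N M A *\<^sub>v v = 0\<^sub>v (2 ^ N)" using psd_kernel[OF pA vc] qAv by simp
  then have "(ptrans N M A *\<^sub>v v) $ l = 0" using l by simp
  then show ?thesis unfolding v_def using spv_mult[OF ptrans_carrier a l] by simp
qed

lemma seq_unique:
  fixes h u :: "nat \<Rightarrow> complex"
  assumes rh: "\<And>n. n + 2 \<le> L \<Longrightarrow> h n - (2 + complex_of_real Z) * h (n + 1) + h (n + 2) = 0"
    and ru: "\<And>n. n + 2 \<le> L \<Longrightarrow> u n - (2 + complex_of_real Z) * u (n + 1) + u (n + 2) = 0"
    and p: "p + 1 \<le> L" and e0: "h p = u p" and e1: "h (p + 1) = u (p + 1)"
    and n: "n \<le> L"
  shows "h n = u n"
proof -
  define cc where "cc = 2 + complex_of_real Z"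
  have fh: "h (n + 2) = cc * h (n + 1) - h n" if "n + 2 \<le> L" for n
  proof -
    have e: "h n - cc * h (n + 1) + h (n + 2) = 0" using rh[OF that] unfolding cc_def .
    have "h (n + 2) = (h n - cc * h (n + 1) + h (n + 2)) + (cc * h (n + 1) - h n)" by (simp add: algebra_simps)
    then show ?thesis unfolding e by simp
  qed
  have fu: "u (n + 2) = cc * u (n + 1) - u n" if "n + 2 \<le> L" for n
  proof -
    have e: "u n - cc * u (n + 1) + u (n + 2) = 0" using ru[OF that] unfolding cc_def .
    have "u (n + 2) = (u n - cc * u (n + 1) + u (n + 2)) + (cc * u (n + 1) - u n)" by (simp add: algebra_simps)
    then show ?thesis unfolding e by simp
  qed
  have bh: "h n = cc * h (n + 1) - h (n + 2)" if "n + 2 \<le> L" for n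
    using fh[OF that] by (simp add: algebra_simps)
  have bu: "u n = cc * u (n + 1) - u (n + 2)" if "n + 2 \<le> L" for n
    using fu[OF that] by (simp add: algebra_simps)
  have up: "p + j + 1 \<le> L \<longrightarrow> h (p + j) = u (p + j) \<and> h (p + j + 1) = u (p + j + 1)" for j
  proof (induction j)
    case 0 then show ?case using e0 e1 by simp
  next
    case (Suc j)
    show ?case
    proof
      assume a: "p + Suc j + 1 \<le> L"
      then have IH: "h (p + j) = u (p + j)" "h (p + j + 1) = u (p + j + 1)" using Suc by auto
      have "h (p + j + 2) = u (p + j + 2)"
        using fh[of "p + j"] fu[of "p + j"] a IH by simp
      then show "h (p + Suc j) = u (p + Suc j) \<and> h (p + Suc j + 1) = u (p + Suc j + 1)"
        using IH by (simp add: add.assoc)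
    qed
  qed
  have down: "j \<le> p \<longrightarrow> h (p - j) = u (p - j) \<and> h (p - j + 1) = u (p - j + 1)" for j
  proof (induction j)
    case 0 then show ?case using e0 e1 by simp
  next
    case (Suc j)
    show ?case
    proof
      assume a: "Suc j \<le> p"
      then have IH: "h (p - j) = u (p - j)" "h (p - j + 1) = u (p - j + 1)" using Suc by auto
      define m where "m = p - Suc j"
      have m1: "m + 1 = p - j" and m2: "m + 2 = p - j + 1" unfolding m_def using a by auto
      have "m + 2 \<le> L" using m2 p a by simp
      then have "h m = u m"
        using bh[of m] bu[of m] IH unfolding m1 m2 by simp
      then show "h (p - Suc j) = u (p - Suc j) \<and> h (p - Suc j + 1) = u (p - Suc j + 1)"
        using IH m1 unfolding m_def by simp
    qed
  qed
  show ?thesis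
  proof (cases "n \<le> p")
    case True then show ?thesis using down[of "p - n"] by simp
  next
    case False
    then show ?thesis using up[of "n - p - 1"] n by simp
  qed
qed

end


context qs
begin

lemma f_rec_nat: "f (int K - int n) - (2 + Z) * f (int K - int (n + 1)) + f (int K - int (n + 2)) = 0"
proof -
  have "f (int K - int n - 2 + 2) = (2 + Z) * f (int K - int n - 2 + 1) - f (int K - int n - 2)"
    using frec by blast
  moreover have "int K - int n - 2 + 2 = int K - int n" "int K - int n - 2 + 1 = int K - int (n + 1)"
    "int K - int n - 2 = int K - int (n + 2)" by simp_all
  ultimately have "f (int K - int n) = (2 + Z) * f (int K - int (n + 1)) - f (int K - int (n + 2))"
    by (simp only:)
  then show ?thesis by simp
qed

lemma g_solve:
  fixes g :: "nat \<Rightarrow> nat \<Rightarrow> complex"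
  assumes Rec: "\<And>x y. x + 2 \<le> N \<Longrightarrow> y + 2 \<le> N \<Longrightarrow> g x y - (2 + complex_of_real Z) * g (x + 1) (y + 1) + g (x + 2) (y + 2) = 0"
    and C1: "\<And>e b. e \<le> K + 1 \<Longrightarrow> b \<le> K \<Longrightarrow> g (K + e) b = complex_of_real \<sigma> * g e (b + K + 1)"
    and C2: "\<And>e b. e \<le> K \<Longrightarrow> b \<le> K + 1 \<Longrightarrow> g (K + 1 + e) b = complex_of_real \<sigma> * g e (b + K)"
    and xy: "x \<le> N" "y \<le> N"
  shows "g x y = g K K * complex_of_real (Rf x y)"
proof -
  define sg where "sg = complex_of_real \<sigma>"
  have sg2: "sg * sg = 1" unfolding sg_def using sig2 by (metis of_real_1 of_real_mult)
  have Zne: "complex_of_real Z \<noteq> 0" using Zp by simp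
  have S1: "g x y = g (x + 1) (y + 1)" if "K \<le> x" "x \<le> 2 * K" "y \<le> K" for x y
  proof -
    have "g (K + (x - K)) y = sg * g (x - K) (y + K + 1)" unfolding sg_def using that by (intro C1) auto
    moreover have "g (K + 1 + (x - K)) (y + 1) = sg * g (x - K) (y + 1 + K)" unfolding sg_def using that by (intro C2) auto
    ultimately show ?thesis using that by (simp add: add.commute add.left_commute)
  qed
  have S2: "g x y = g (x + 1) (y + 1)" if "x \<le> K" "K \<le> y" "y \<le> 2 * K" for x y
  proof -
    have a: "g (K + 1 + x) (y - K) = sg * g x (y - K + K)" unfolding sg_def using that by (intro C2) auto
    have b: "g (K + (x + 1)) (y - K) = sg * g (x + 1) (y - K + K + 1)" unfolding sg_def using that by (intro C1) auto
    have "sg * g x y = sg * g (x + 1) (y + 1)" using a b that by (simp add: add.commute add.left_commute)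
    then have "sg * (sg * g x y) = sg * (sg * g (x + 1) (y + 1))" by simp
    then show ?thesis unfolding mult.assoc[symmetric] sg2 by simp
  qed
  have zero_pos: "g (n + \<delta>) n = 0" if d: "1 \<le> \<delta>" "\<delta> + 2 \<le> N" and n: "n + \<delta> \<le> N" for \<delta> n
  proof -
    define h where "h n = g (n + \<delta>) n" for n
    define n0 where "n0 = (if K \<le> \<delta> then 0 else K - \<delta>)"
    have n0a: "K \<le> n0 + \<delta>" "n0 + 1 + \<delta> \<le> 2 * K" "n0 + 1 \<le> K" unfolding n0_def using d NK K1 by auto
    have e1: "h n0 = h (n0 + 1)" unfolding h_def using S1[of "n0 + \<delta>" n0] n0a by (simp add: add_ac)
    have e2: "h (n0 + 1) = h (n0 + 2)" unfolding h_def using S1[of "n0 + 1 + \<delta>" "n0 + 1"] n0a by (simp add: add_ac)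
    have rh: "h m - (2 + complex_of_real Z) * h (m + 1) + h (m + 2) = 0" if "m + 2 \<le> N - \<delta>" for m
      unfolding h_def using Rec[of "m + \<delta>" m] that d by (simp add: add_ac)
    have "h n0 - (2 + complex_of_real Z) * h (n0 + 1) + h (n0 + 2) = 0"
      using rh[of n0] n0a NK by simp
    then have "complex_of_real Z * h n0 = 0" unfolding e2[symmetric] e1[symmetric] by (simp add: algebra_simps)
    then have z0: "h n0 = 0" using Zne by simp
    then have z1: "h (n0 + 1) = 0" using e1 by simp
    have "h n = (\<lambda>_. 0) n"
      by (rule seq_unique[where L = "N - \<delta>" and p = n0]) (use rh z0 z1 n0a n NK in auto)
    then show ?thesis unfolding h_def by simp
  qed
  have zero_neg: "g n (n + \<delta>) = 0" if d: "1 \<le> \<delta>" "\<delta> + 2 \<le> N" and n: "n + \<delta> \<le> N" for \<delta> n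
  proof -
    define h where "h n = g n (n + \<delta>)" for n
    define n0 where "n0 = (if K \<le> \<delta> then 0 else K - \<delta>)"
    have n0a: "K \<le> n0 + \<delta>" "n0 + 1 + \<delta> \<le> 2 * K" "n0 + 1 \<le> K" unfolding n0_def using d NK K1 by auto
    have e1: "h n0 = h (n0 + 1)" unfolding h_def using S2[of n0 "n0 + \<delta>"] n0a by (simp add: add_ac)
    have e2: "h (n0 + 1) = h (n0 + 2)" unfolding h_def using S2[of "n0 + 1" "n0 + 1 + \<delta>"] n0a by (simp add: add_ac)
    have rh: "h m - (2 + complex_of_real Z) * h (m + 1) + h (m + 2) = 0" if "m + 2 \<le> N - \<delta>" for m
      unfolding h_def using Rec[of m "m + \<delta>"] that d by (simp add: add_ac)
    have "h n0 - (2 + complex_of_real Z) * h (n0 + 1) + h (n0 + 2) = 0"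
      using rh[of n0] n0a NK by simp
    then have "complex_of_real Z * h n0 = 0" unfolding e2[symmetric] e1[symmetric] by (simp add: algebra_simps)
    then have z0: "h n0 = 0" using Zne by simp
    then have z1: "h (n0 + 1) = 0" using e1 by simp
    have "h n = (\<lambda>_. 0) n"
      by (rule seq_unique[where L = "N - \<delta>" and p = n0]) (use rh z0 z1 n0a n NK in auto)
    then show ?thesis unfolding h_def by simp
  qed
  have diag: "g n n = g K K * complex_of_real (f (int K - int n))" if n: "n \<le> N" for n
  proof -
    have eK1: "g (K + 1) (K + 1) = g K K" using S1[of K K] by simp
    have "(\<lambda>n. g n n) n = (\<lambda>n. g K K * complex_of_real (f (int K - int n))) n"
    proof (rule seq_unique[where L = N and p = K])
      show "g m m - (2 + complex_of_real Z) * g (m + 1) (m + 1) + g (m + 2) (m + 2) = 0" if "m + 2 \<le> N" for m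
        using Rec[of m m] that by simp
      show "g K K * complex_of_real (f (int K - int m)) - (2 + complex_of_real Z) * (g K K * complex_of_real (f (int K - int (m + 1))))
          + g K K * complex_of_real (f (int K - int (m + 2))) = 0" for m
      proof -
        have "complex_of_real (f (int K - int m) - (2 + Z) * f (int K - int (m + 1)) + f (int K - int (m + 2))) = 0"
          using f_rec_nat[of m] by simp
        then have "complex_of_real (f (int K - int m)) - (2 + complex_of_real Z) * complex_of_real (f (int K - int (m + 1)))
            + complex_of_real (f (int K - int (m + 2))) = 0" by simp
        then have "g K K * (complex_of_real (f (int K - int m)) - (2 + complex_of_real Z) * complex_of_real (f (int K - int (m + 1)))
            + complex_of_real (f (int K - int (m + 2)))) = 0" by simp
        then show ?thesis by (simp add: algebra_simps)
      qed
      show "K + 1 \<le> N" using NK by simp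
      show "g K K = g K K * complex_of_real (f (int K - int K))" using f0 by simp
      show "g (K + 1) (K + 1) = g K K * complex_of_real (f (int K - int (K + 1)))" using eK1 f_m1 by simp
      show "n \<le> N" by (rule n)
    qed
    then show ?thesis by simp
  qed
  have sgc: "g N 0 = sg * g K K"
  proof -
    have "g (K + (K + 1)) 0 = sg * g (K + 1) (0 + K + 1)" unfolding sg_def by (intro C1) auto
    then show ?thesis using S1[of K K] NK by (simp add: add_ac mult_2)
  qed
  have sgc2: "g 0 N = sg * g K K"
  proof -
    have "g (K + 0) K = sg * g 0 (K + K + 1)" unfolding sg_def by (intro C1) auto
    then have "sg * g K K = sg * (sg * g 0 N)" using NK by (simp add: add_ac mult_2)
    then show ?thesis unfolding mult.assoc[symmetric] sg2 by simp
  qed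
  show ?thesis
  proof (cases "x = y")
    case True then show ?thesis using diag[of x] xy by (simp add: Rf_diag)
  next
    case False
    show ?thesis
    proof (cases "y < x")
      case True
      define \<delta> where "\<delta> = x - y"
      have x: "x = y + \<delta>" unfolding \<delta>_def using True by simp
      have Rf0: "Rf x y = (if x = N \<and> y = 0 then \<sigma> else 0)" unfolding Rf_def using True by auto
      consider "\<delta> + 2 \<le> N" | "\<delta> = N - 1" | "\<delta> = N" using xy x by linarith
      then show ?thesis
      proof cases
        case 1
        then have "g x y = 0" using zero_pos[of \<delta> y] True xy x by simp
        moreover have "\<not> (x = N \<and> y = 0)" using 1 x N_pos by auto
        ultimately show ?thesis using Rf0 by auto
      next
        case 2
        then have y01: "y = 0 \<or> y = 1" using xy x NK by auto
        have z1: "g K (K + 1) = 0" using zero_neg[of 1 K] NK K1 by simp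
        have z2: "g (K + 1) (K + 2) = 0" using zero_neg[of 1 "K + 1"] NK K1 by (simp add: add_ac)
        have a: "g (K + K) 0 = sg * g K (0 + K + 1)" unfolding sg_def by (intro C1) auto
        have b: "g (K + (K + 1)) 1 = sg * g (K + 1) (1 + K + 1)" unfolding sg_def using K1 by (intro C1) auto
        have "g x y = 0" using y01
        proof
          assume "y = 0" then have "x = K + K" using 2 x NK by simp
          then show ?thesis using a z1 \<open>y = 0\<close> by (simp add: add_ac)
        next
          assume "y = 1" then have "x = K + (K + 1)" using 2 x NK by simp
          then show ?thesis using b z2 \<open>y = 1\<close> by (simp add: add_ac)
        qed
        moreover have "\<not> (x = N \<and> y = 0)" using 2 x N_pos by auto
        ultimately show ?thesis using Rf0 by auto
      next
        case 3
        then have "y = 0" "x = N" using xy x by auto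
        then show ?thesis using Rf0 sgc unfolding sg_def by (simp add: mult.commute)
      qed
    next
      case False
      then have yx: "x < y" using \<open>x \<noteq> y\<close> by simp
      define \<delta> where "\<delta> = y - x"
      have y: "y = x + \<delta>" unfolding \<delta>_def using yx by simp
      have Rf0: "Rf x y = (if x = 0 \<and> y = N then \<sigma> else 0)" unfolding Rf_def using yx by auto
      consider "\<delta> + 2 \<le> N" | "\<delta> = N - 1" | "\<delta> = N" using xy y by linarith
      then show ?thesis
      proof cases
        case 1
        then have "g x y = 0" using zero_neg[of \<delta> x] yx xy y by simp
        moreover have "\<not> (x = 0 \<and> y = N)" using 1 y N_pos by auto
        ultimately show ?thesis using Rf0 by auto
      next
        case 2
        then have x01: "x = 0 \<or> x = 1" using xy y NK by auto
        have z1: "g (K + 1) K = 0" using zero_pos[of 1 K] NK K1 by (simp add: add_ac)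
        have z2: "g (K + 2) (K + 1) = 0" using zero_pos[of 1 "K + 1"] NK K1 by (simp add: add_ac)
        have a: "g (K + 1 + 0) K = sg * g 0 (K + K)" unfolding sg_def by (intro C2) auto
        have b: "g (K + 1 + 1) (K + 1) = sg * g 1 (K + 1 + K)" unfolding sg_def using K1 by (intro C2) auto
        have "g x y = 0" using x01
        proof
          assume x0: "x = 0" then have yy: "y = K + K" using 2 y NK by simp
          have "sg * g 0 (K + K) = 0" using a z1 by simp
          then have "sg * (sg * g 0 (K + K)) = 0" by simp
          then show ?thesis unfolding mult.assoc[symmetric] sg2 x0 yy by simp
        next
          assume x1: "x = 1" then have yy: "y = K + 1 + K" using 2 y NK by simp
          have "sg * g 1 (K + 1 + K) = 0" using b z2 by (simp add: add_ac)
          then have "sg * (sg * g 1 (K + 1 + K)) = 0" by simp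
          then show ?thesis unfolding mult.assoc[symmetric] sg2 x1 yy by simp
        qed
        moreover have "\<not> (x = 0 \<and> y = N)" using 2 y N_pos by auto
        ultimately show ?thesis using Rf0 by auto
      next
        case 3
        then have "x = 0" "y = N" using xy y by auto
        then show ?thesis using Rf0 sgc2 unfolding sg_def by (simp add: mult.commute)
      qed
    qed
  qed
qed

end


lemma sum2: "(\<Sum>k<2. f k) = f 0 + f (1::nat)" by (simp add: numeral_2_eq_2)
lemma sum3: "(\<Sum>k<3. f k) = f 0 + f 1 + f (2::nat)" by (simp add: numeral_3_eq_3 numeral_2_eq_2)

context qs
begin

lemma A_is_rho:
  assumes A: "A \<in> ppt_states N" and B: "B \<in> ppt_states N" and t: "0 < t" "t < 1"
    and eq: "rho = complex_of_real t \<cdot>\<^sub>m A + complex_of_real (1 - t) \<cdot>\<^sub>m B"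
  shows "A = rho"
proof -
  define n where "n = (2::nat) ^ N"
  have Ac: "A \<in> carrier_mat n n" using A unfolding ppt_states_def density_def psd_def n_def by auto
  have trA: "mtrace A = 1" using A unfolding ppt_states_def density_def by auto
  note KT' = KT[OF A B t eq]
  have col: "A $$ (l, a) = A $$ (l, b)" if l: "l < n" and ab: "a < n" "b < n" "num_ones N a = num_ones N b" for l a b
  proof -
    define aa where "aa k = (if k = 0 then a else b)" for k :: nat
    define cc where "cc k = (if k = 0 then 1 else - 1 :: complex)" for k :: nat
    have aa: "\<And>k. k < 2 \<Longrightarrow> aa k < 2 ^ N" unfolding aa_def using ab n_def by auto
    have q0: "(\<Sum>k'<2. \<Sum>k<2. ptrans N {} rho $$ (aa k', aa k) * cc k * cnj (cc k')) = 0"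
      unfolding ptrans_empty sum2 aa_def cc_def using ab unfolding n_def by (simp add: rho_entry)
    have "(\<Sum>k<2. ptrans N {} A $$ (l, aa k) * cc k) = 0"
      by (rule KT'[OF _ aa q0]) (use l n_def in auto)
    then show ?thesis unfolding sum2 aa_def cc_def using l ab unfolding n_def by (simp add: ptrans_entry pt_empty)
  qed
  have row: "A $$ (a, l) = A $$ (b, l)" if l: "l < n" and ab: "a < n" "b < n" "num_ones N a = num_ones N b" for l a b
  proof -
    define aa where "aa k = (if k = 0 then a else b)" for k :: nat
    define cc where "cc k = (if k = 0 then 1 else - 1 :: complex)" for k :: nat
    have aa: "\<And>k. k < 2 \<Longrightarrow> aa k < 2 ^ N" unfolding aa_def using ab n_def by auto
    have q0: "(\<Sum>k'<2. \<Sum>k<2. ptrans N {..<N} rho $$ (aa k', aa k) * cc k * cnj (cc k')) = 0"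
      unfolding sum2 aa_def cc_def using ab unfolding n_def by (simp add: ptrans_entry pt_full rho_entry)
    have "(\<Sum>k<2. ptrans N {..<N} A $$ (l, aa k) * cc k) = 0"
      by (rule KT'[OF _ aa q0]) (use l n_def in auto)
    then show ?thesis unfolding sum2 aa_def cc_def using l ab unfolding n_def by (simp add: ptrans_entry pt_full)
  qed
  define g where "g x y = A $$ (R N x 0, R N y 0)" for x y
  have Rw: "num_ones N (R N x 0) = x" if "x \<le> N" for x using num_ones_R[of x N 0] that by simp
  have gA: "A $$ (i, j) = g (num_ones N i) (num_ones N j)" if "i < n" "j < n" for i j
  proof -
    have a: "R N (num_ones N i) 0 < n" "R N (num_ones N j) 0 < n" unfolding n_def by (simp_all add: R_lt)
    have "A $$ (i, j) = A $$ (i, R N (num_ones N j) 0)"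
      by (rule col) (use that a Rw num_ones_le in auto)
    also have "\<dots> = A $$ (R N (num_ones N i) 0, R N (num_ones N j) 0)"
      by (rule row) (use that a Rw num_ones_le in auto)
    finally show ?thesis unfolding g_def .
  qed
  have gpt: "ptrans N M A $$ (l, j) = g (mo N M j + mc N M l) (mo N M l + mc N M j)" if "l < n" "j < n" for M l j
    using that unfolding n_def by (simp add: ptrans_entry gA[unfolded n_def] pt_lt num_ones_pt)
  have G3: "g e (b + d) - (2 + complex_of_real Z) * g (e + 1) (b + d + 1) + g (e + 2) (b + d + 2) = 0"
    if e: "e + 2 \<le> N" and b: "b \<le> 2" and d: "d + 4 \<le> N" for e b d
  proof -
    define aa where "aa k = R 2 k (d + k)" for k
    define cc where "cc k = (if k = 1 then - (2 + complex_of_real Z) else 1)" for k :: nat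
    have aa: "\<And>k. k < 3 \<Longrightarrow> aa k < 2 ^ N" unfolding aa_def by (simp add: R_lt)
    have moa: "mo N {..<2} (aa k) = k" if "k < 3" for k unfolding aa_def using that d by (intro mo_R) auto
    have mca: "mc N {..<2} (aa k) = d + k" if "k < 3" for k unfolding aa_def using that d by (intro mc_R) auto
    have ent: "ptrans N {..<2} rho $$ (aa k', aa k) = complex_of_real (s * f (int K - int (d + k + k')))"
      if "k < 3" "k' < 3" for k k'
    proof -
      have "ptrans N {..<2} rho $$ (aa k', aa k) = complex_of_real (s * Rf (k + (d + k')) (k' + (d + k)))"
        using rho_pt_entry[OF aa aa, of k' k] that moa mca by simp
      also have "Rf (k + (d + k')) (k' + (d + k)) = f (int K - int (d + k + k'))"
        using Rf_diag[of "d + k + k'"] by (simp add: add_ac)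
      finally show ?thesis .
    qed
    define F where "F j = f (int K - int (d + j))" for j
    have rid: "F 0 - 2 * (2 + Z) * F 1 + (2 + (2 + Z) ^ 2) * F 2 - 2 * (2 + Z) * F 3 + F 4 = 0"
    proof -
      have r0: "F 0 - (2 + Z) * F 1 + F 2 = 0" unfolding F_def using f_rec_nat[of d] by (simp add: add_ac)
      have r1: "F 1 - (2 + Z) * F 2 + F 3 = 0" unfolding F_def using f_rec_nat[of "d + 1"] by (simp add: add_ac)
      have r2: "F 2 - (2 + Z) * F 3 + F 4 = 0" unfolding F_def using f_rec_nat[of "d + 2"] by (simp add: add_ac)
      have "F 0 - 2 * (2 + Z) * F 1 + (2 + (2 + Z) ^ 2) * F 2 - 2 * (2 + Z) * F 3 + F 4
          = (F 0 - (2 + Z) * F 1 + F 2) - (2 + Z) * (F 1 - (2 + Z) * F 2 + F 3) + (F 2 - (2 + Z) * F 3 + F 4)"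
        by (simp add: algebra_simps power2_eq_square)
      then show ?thesis using r0 r1 r2 by simp
    qed
    have q0: "(\<Sum>k'<3. \<Sum>k<3. ptrans N {..<2} rho $$ (aa k', aa k) * cc k * cnj (cc k')) = 0"
    proof -
      have "(\<Sum>k'<3. \<Sum>k<3. ptrans N {..<2} rho $$ (aa k', aa k) * cc k * cnj (cc k'))
          = complex_of_real (s * (F 0 - 2 * (2 + Z) * F 1 + (2 + (2 + Z) ^ 2) * F 2 - 2 * (2 + Z) * F 3 + F 4))"
        unfolding sum3 by (simp add: ent cc_def F_def algebra_simps power2_eq_square numeral_3_eq_3 add_ac)
      also have "\<dots> = 0" unfolding rid by simp
      finally show ?thesis .
    qed
    define l where "l = R 2 b e"
    have l: "l < 2 ^ N" unfolding l_def by (rule R_lt)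
    have mol: "mo N {..<2} l = b" unfolding l_def using b d by (intro mo_R) auto
    have mcl: "mc N {..<2} l = e" unfolding l_def using b e by (intro mc_R) auto
    have "(\<Sum>k<3. ptrans N {..<2} A $$ (l, aa k) * cc k) = 0"
      by (rule KT'[OF _ aa q0 l]) (use d in auto)
    then show ?thesis unfolding sum3 using gpt[of l "aa _" "{..<2}"] l aa moa mca mol mcl
      by (simp add: n_def cc_def add_ac) (simp add: algebra_simps)
  qed
  have Rec: "g x y - (2 + complex_of_real Z) * g (x + 1) (y + 1) + g (x + 2) (y + 2) = 0"
    if "x + 2 \<le> N" "y + 2 \<le> N" for x y
  proof (cases "y + 4 \<le> N")
    case True then show ?thesis using G3[of x 0 y] that by simp
  next
    case False
    then show ?thesis using G3[of x "y + 4 - N" "N - 4"] that N5 by simp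
  qed
  have Cgen: "g (m + e) b' - complex_of_real \<sigma> * g e (b' + (N - m)) = 0"
    if m: "m = K \<or> m = K + 1" and e: "m + e \<le> N" and b': "b' \<le> m" for m e b'
  proof -
    define aa where "aa k = (if k = 0 then R m m 0 else R m 0 (N - m))" for k :: nat
    define cc where "cc k = (if k = 0 then 1 else - complex_of_real \<sigma>)" for k :: nat
    have mN: "m \<le> N" using m NK by auto
    have aa: "\<And>k. k < 2 \<Longrightarrow> aa k < 2 ^ N" unfolding aa_def by (simp add: R_lt)
    have mx: "mo N {..<m} (R m m 0) = m" "mc N {..<m} (R m m 0) = 0" using mN by (simp_all add: mo_R mc_R)
    have my: "mo N {..<m} (R m 0 (N - m)) = 0" "mc N {..<m} (R m 0 (N - m)) = N - m" using mN by (simp_all add: mo_R mc_R)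
    have v1: "f (int K - int m) = 1" and v2: "f (int K - int (N - m)) = 1"
      using m NK f0 f_m1 by auto
    have q0: "(\<Sum>k'<2. \<Sum>k<2. ptrans N {..<m} rho $$ (aa k', aa k) * cc k * cnj (cc k')) = 0"
    proof -
      have "(\<Sum>k'<2. \<Sum>k<2. ptrans N {..<m} rho $$ (aa k', aa k) * cc k * cnj (cc k'))
          = complex_of_real (s * (Rf m m - \<sigma> * Rf 0 N - \<sigma> * Rf N 0 + \<sigma> * \<sigma> * Rf (N - m) (N - m)))"
        unfolding sum2 aa_def cc_def using mN
        by (simp add: rho_pt_entry R_lt mx my algebra_simps)
      also have "Rf m m - \<sigma> * Rf 0 N - \<sigma> * Rf N 0 + \<sigma> * \<sigma> * Rf (N - m) (N - m) = 0"
        unfolding Rf_diag v1 v2 sig2 using N_pos sig2 by (simp add: Rf_def)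
      finally show ?thesis by simp
    qed
    define l where "l = R m b' e"
    have l: "l < 2 ^ N" unfolding l_def by (rule R_lt)
    have mol: "mo N {..<m} l = b'" unfolding l_def using b' mN by (intro mo_R) auto
    have mcl: "mc N {..<m} l = e" unfolding l_def using b' e by (intro mc_R) auto
    have "(\<Sum>k<2. ptrans N {..<m} A $$ (l, aa k) * cc k) = 0"
      by (rule KT'[OF _ aa q0 l]) (use mN in auto)
    moreover have e1: "ptrans N {..<m} A $$ (l, R m m 0) = g (m + e) b'"
      using gpt[of l "R m m 0" "{..<m}"] l mx mol mcl by (simp add: n_def R_lt add_ac)
    moreover have e2: "ptrans N {..<m} A $$ (l, R m 0 (N - m)) = g e (b' + (N - m))"
      using gpt[of l "R m 0 (N - m)" "{..<m}"] l my mol mcl by (simp add: n_def R_lt add_ac)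
    ultimately show ?thesis unfolding sum2 aa_def cc_def by (simp add: algebra_simps)
  qed
  have C1: "g (K + e) b' = complex_of_real \<sigma> * g e (b' + K + 1)" if "e \<le> K + 1" "b' \<le> K" for e b'
    using Cgen[of K e b'] that NK by (simp add: add_ac)
  have C2: "g (K + 1 + e) b' = complex_of_real \<sigma> * g e (b' + K)" if "e \<le> K" "b' \<le> K + 1" for e b'
    using Cgen[of "K + 1" e b'] that NK by (simp add: add_ac)
  have gsol: "g x y = g K K * complex_of_real (Rf x y)" if "x \<le> N" "y \<le> N" for x y
    by (rule g_solve[OF Rec C1 C2 that])
  have Aent: "A $$ (i, j) = g K K * complex_of_real (Rf (num_ones N i) (num_ones N j))" if "i < n" "j < n" for i j
    using gA[OF that] gsol num_ones_le by simp
  define T where "T = (\<Sum>i<n. complex_of_real (Rf (num_ones N i) (num_ones N i)))"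
  have "mtrace rho = complex_of_real s * T"
    unfolding mtrace_def n_def T_def using rho_carrier by (simp add: rho_entry sum_distrib_left)
  then have T1: "complex_of_real s * T = 1" using trace_rho by simp
  have "mtrace A = g K K * T"
    unfolding mtrace_def T_def using Ac by (simp add: Aent sum_distrib_left)
  then have T2: "g K K * T = 1" using trA by simp
  have "T \<noteq> 0" using T1 by auto
  then have gKK: "g K K = complex_of_real s" using T1 T2 by (metis mult_right_cancel)
  show "A = rho"
  proof (rule eq_matI)
    show "dim_row A = dim_row rho" "dim_col A = dim_col rho" using Ac rho_carrier n_def by auto
    fix i j assume "i < dim_row rho" "j < dim_col rho"
    then have ij: "i < n" "j < n" using rho_carrier n_def by auto
    show "A $$ (i, j) = rho $$ (i, j)" using ij unfolding Aent[OF ij] gKK n_def by (simp add: rho_entry)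
  qed
qed

lemma extreme_rho: "extreme_point_mat rho (ppt_states N)"
  unfolding extreme_point_mat_def
proof (intro conjI ballI allI impI)
  show "rho \<in> ppt_states N" unfolding ppt_states_def using density_rho ppt_rho by simp
  fix a b t assume a: "a \<in> ppt_states N" and b: "b \<in> ppt_states N"
    and h: "0 < t \<and> t < 1 \<and> rho = complex_of_real t \<cdot>\<^sub>m a + complex_of_real (1 - t) \<cdot>\<^sub>m b"
  have "a = rho" using A_is_rho[OF a b] h by blast
  moreover have "b = rho"
  proof (rule A_is_rho[OF b a, of "1 - t"])
    show "0 < 1 - t" "1 - t < 1" using h by auto
    have ac: "a \<in> carrier_mat (2 ^ N) (2 ^ N)" "b \<in> carrier_mat (2 ^ N) (2 ^ N)"
      using a b unfolding ppt_states_def density_def psd_def by auto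
    show "rho = complex_of_real (1 - t) \<cdot>\<^sub>m b + complex_of_real (1 - (1 - t)) \<cdot>\<^sub>m a"
    proof -
      have "complex_of_real t \<cdot>\<^sub>m a + complex_of_real (1 - t) \<cdot>\<^sub>m b = complex_of_real (1 - t) \<cdot>\<^sub>m b + complex_of_real t \<cdot>\<^sub>m a"
        by (rule comm_add_mat) (use ac in auto)
      then show ?thesis using h by simp
    qed
  qed
  ultimately show "a = b" by simp
qed

end


lemma cmod_sq: "cmod z * cmod z = Re z * Re z + Im z * Im z"
  using cmod_power2[of z] by (simp add: power2_eq_square)

lemma re_ofr: "Re (complex_of_real a * z) = a * Re z" by simp

lemma psd2_q:
  fixes X :: "complex mat"
  assumes X: "psd 2 X"
  shows "Im (X $$ (0,0) * cnj \<alpha> * \<alpha> + X $$ (0,1) * \<beta> * cnj \<alpha> + X $$ (1,0) * \<alpha> * cnj \<beta> + X $$ (1,1) * \<beta> * cnj \<beta>) = 0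
    \<and> Re (X $$ (0,0) * cnj \<alpha> * \<alpha> + X $$ (0,1) * \<beta> * cnj \<alpha> + X $$ (1,0) * \<alpha> * cnj \<beta> + X $$ (1,1) * \<beta> * cnj \<beta>) \<ge> 0"
proof -
  have Xc: "X \<in> carrier_mat 2 2" using X unfolding psd_def by simp
  define v where "v = vec 2 (\<lambda>i. if i = 0 then \<alpha> else \<beta>)"
  have vc: "v \<in> carrier_vec 2" unfolding v_def by simp
  have "(X *\<^sub>v v) \<bullet>c v = X $$ (0,0) * cnj \<alpha> * \<alpha> + X $$ (0,1) * \<beta> * cnj \<alpha> + X $$ (1,0) * \<alpha> * cnj \<beta> + X $$ (1,1) * \<beta> * cnj \<beta>"
  proof -
    have "(X *\<^sub>v v) \<bullet>c v = (\<Sum>i<2. \<Sum>j<2. X $$ (i, j) * v $ j * cnj (v $ i))" by (rule qform_sum[OF Xc vc])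
    then show ?thesis unfolding v_def by (simp add: sum2 algebra_simps)
  qed
  then show ?thesis using X vc unfolding psd_def by metis
qed

lemma psd2_facts:
  fixes X :: "complex mat"
  assumes X: "psd 2 X"
  shows "Im (X $$ (0,0)) = 0" "Re (X $$ (0,0)) \<ge> 0" "Im (X $$ (1,1)) = 0" "Re (X $$ (1,1)) \<ge> 0"
    "X $$ (1,0) = cnj (X $$ (0,1))"
    "(cmod (X $$ (0,1)))\<^sup>2 \<le> Re (X $$ (0,0)) * Re (X $$ (1,1))"
proof -
  note q = psd2_q[OF X]
  show a: "Im (X $$ (0,0)) = 0" "Re (X $$ (0,0)) \<ge> 0" using q[of 1 0] by simp_all
  show b: "Im (X $$ (1,1)) = 0" "Re (X $$ (1,1)) \<ge> 0" using q[of 0 1] by simp_all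
  have c1: "Im (X $$ (0,1) + X $$ (1,0)) = 0" using q[of 1 1] a b by simp
  have c2: "Re (X $$ (0,1) - X $$ (1,0)) = 0" using q[of 1 \<i>] a b by (simp add: algebra_simps)
  show herm: "X $$ (1,0) = cnj (X $$ (0,1))" using c1 c2 by (simp add: complex_eq_iff)
  define a0 where "a0 = Re (X $$ (0,0))"
  define c0 where "c0 = Re (X $$ (1,1))"
  define z where "z = X $$ (0,1)"
  have X00: "X $$ (0,0) = complex_of_real a0" unfolding a0_def using a by (simp add: complex_eq_iff)
  have X11: "X $$ (1,1) = complex_of_real c0" unfolding c0_def using b by (simp add: complex_eq_iff)
  have Q: "Re (X $$ (0,0) * cnj \<alpha> * \<alpha> + X $$ (0,1) * \<beta> * cnj \<alpha> + X $$ (1,0) * \<alpha> * cnj \<beta> + X $$ (1,1) * \<beta> * cnj \<beta>)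
     = a0 * (cmod \<alpha>)\<^sup>2 + c0 * (cmod \<beta>)\<^sup>2 + 2 * Re (z * \<beta> * cnj \<alpha>)" for \<alpha> \<beta>
  proof -
    have h10: "X $$ (1,0) = cnj z" using herm unfolding z_def .
    have "X $$ (1,0) * \<alpha> * cnj \<beta> = cnj z * \<alpha> * cnj \<beta>" by (simp only: h10)
    also have "\<dots> = cnj (z * \<beta> * cnj \<alpha>)" by simp
    finally have e10: "X $$ (1,0) * \<alpha> * cnj \<beta> = cnj (z * \<beta> * cnj \<alpha>)" .
    have n1: "Re (cnj \<alpha> * \<alpha>) = (cmod \<alpha>)\<^sup>2" "Re (\<beta> * cnj \<beta>) = (cmod \<beta>)\<^sup>2"
      using complex_norm_square[of \<alpha>] complex_norm_square[of \<beta>]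
      by (metis Re_complex_of_real mult.commute)+
    have "Re (X $$ (0,0) * cnj \<alpha> * \<alpha> + X $$ (0,1) * \<beta> * cnj \<alpha> + X $$ (1,0) * \<alpha> * cnj \<beta> + X $$ (1,1) * \<beta> * cnj \<beta>)
       = a0 * Re (cnj \<alpha> * \<alpha>) + Re (z * \<beta> * cnj \<alpha>) + Re (cnj (z * \<beta> * cnj \<alpha>)) + c0 * Re (\<beta> * cnj \<beta>)"
      unfolding e10 X00 X11 z_def by (simp only: plus_complex.sel mult.assoc Re_complex_of_real re_ofr)
    moreover have "Re (cnj (z * \<beta> * cnj \<alpha>)) = Re (z * \<beta> * cnj \<alpha>)" by (simp add: algebra_simps)
    ultimately show ?thesis unfolding n1 by linarith
  qed
  have nz: "(cmod z)\<^sup>2 = Re (z * cnj z)" using complex_norm_square[of z] by (metis Re_complex_of_real)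
  have main: "(cmod z)\<^sup>2 \<le> a0 * c0"
  proof (cases "a0 > 0")
    case True
    have "0 \<le> a0 * (cmod (- z))\<^sup>2 + c0 * (cmod (complex_of_real a0))\<^sup>2 + 2 * Re (z * complex_of_real a0 * cnj (- z))"
      using q[of "- z" "complex_of_real a0"] unfolding Q by simp
    then have "0 \<le> a0 * (a0 * c0 - (cmod z)\<^sup>2)" by (simp add: cmod_sq power2_eq_square algebra_simps)
    then show ?thesis using True by (simp add: zero_le_mult_iff)
  next
    case False
    then have a00: "a0 = 0" using a unfolding a0_def by simp
    show ?thesis
    proof (cases "c0 > 0")
      case True
      have "0 \<le> a0 * (cmod (complex_of_real c0))\<^sup>2 + c0 * (cmod (- cnj z))\<^sup>2 + 2 * Re (z * (- cnj z) * cnj (complex_of_real c0))"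
        using q[of "complex_of_real c0" "- cnj z"] unfolding Q by simp
      then have "0 \<le> c0 * (a0 * c0 - (cmod z)\<^sup>2)" by (simp add: cmod_sq power2_eq_square algebra_simps)
      then show ?thesis using True by (simp add: zero_le_mult_iff)
    next
      case False
      then have c00: "c0 = 0" using b unfolding c0_def by simp
      have "0 \<le> a0 * (cmod (- z))\<^sup>2 + c0 * (cmod 1)\<^sup>2 + 2 * Re (z * 1 * cnj (- z))"
        using q[of "- z" 1] unfolding Q by simp
      then have "(cmod z)\<^sup>2 \<le> 0" unfolding a00 c00 by (simp add: cmod_sq power2_eq_square algebra_simps)
      then show ?thesis using a00 c00 by simp
    qed
  qed
  then show "(cmod (X $$ (0,1)))\<^sup>2 \<le> Re (X $$ (0,0)) * Re (X $$ (1,1))"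
    unfolding a0_def c0_def z_def .
qed


lemma factor_facts:
  fixes X :: "complex mat"
  assumes X: "psd 2 X" and x: "x \<le> 1" and y: "y \<le> 1"
  shows "X $$ (x, x) = complex_of_real (Re (X $$ (x, x)))" "Re (X $$ (x, x)) \<ge> 0"
    "(cmod (X $$ (x, y)))\<^sup>2 \<le> Re (X $$ (x, x)) * Re (X $$ (y, y))"
proof -
  note F = psd2_facts[OF X]
  have xx: "x = 0 \<or> x = 1" "y = 0 \<or> y = 1" using x y by auto
  show a: "X $$ (x, x) = complex_of_real (Re (X $$ (x, x)))" using xx F by (auto simp: complex_eq_iff)
  show "Re (X $$ (x, x)) \<ge> 0" using xx F by auto
  have r: "(cmod (X $$ (t, t)))\<^sup>2 = Re (X $$ (t, t)) * Re (X $$ (t, t))" if "t = 0 \<or> t = 1" for t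
    using that F by (auto simp: power2_eq_square cmod_sq)
  show "(cmod (X $$ (x, y)))\<^sup>2 \<le> Re (X $$ (x, x)) * Re (X $$ (y, y))"
    using xx F r by (auto simp: mult.commute)
qed

lemma key_ineq:
  fixes x y :: real and z :: complex
  assumes "x \<ge> 0" "y \<ge> 0" "(cmod z)\<^sup>2 \<le> x * y"
  shows "x + y - 2 * Re z \<ge> 0" and "x + y - 2 * Re z = 0 \<Longrightarrow> x = y"
proof -
  have re: "(Re z)\<^sup>2 \<le> (cmod z)\<^sup>2" using abs_Re_le_cmod[of z]
    by (metis abs_ge_zero power2_abs power_mono)
  show g: "x + y - 2 * Re z \<ge> 0"
  proof (rule ccontr)
    assume "\<not> ?thesis"
    then have "2 * Re z > x + y" by simp
    then have "(2 * Re z)\<^sup>2 > (x + y)\<^sup>2" using assms by (intro power_strict_mono) auto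
    moreover have "(x + y)\<^sup>2 \<ge> 4 * (x * y)"
    proof -
      have "0 \<le> (x - y)\<^sup>2" by simp
      then show ?thesis by (simp add: power2_eq_square algebra_simps)
    qed
    ultimately show False using re assms(3) by (simp add: power2_eq_square)
  qed
  assume e: "x + y - 2 * Re z = 0"
  then have "(x + y)\<^sup>2 = 4 * (Re z)\<^sup>2" by (simp add: power2_eq_square algebra_simps)
  then have "(x + y)\<^sup>2 \<le> 4 * (x * y)" using re assms(3) by simp
  then have "(x - y)\<^sup>2 \<le> 0" by (simp add: power2_eq_square algebra_simps)
  then show "x = y" by simp
qed

locale prodst =
  fixes NN :: nat and r :: "nat \<Rightarrow> complex mat"
  assumes rp: "\<And>q. q < NN \<Longrightarrow> psd 2 (r q)"
begin

definition P :: "nat \<Rightarrow> nat \<Rightarrow> complex" where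
  "P i j = (\<Prod>q<NN. r q $$ (qbit i q, qbit j q))"
definition D :: "nat \<Rightarrow> real" where
  "D i = (\<Prod>q<NN. Re (r q $$ (qbit i q, qbit i q)))"

lemma D_nonneg: "D i \<ge> 0"
  unfolding D_def by (rule prod_nonneg) (use factor_facts(2)[OF rp qbit_le1] in auto)

lemma P_diag: "P i i = complex_of_real (D i)"
proof -
  have "P i i = (\<Prod>q<NN. complex_of_real (Re (r q $$ (qbit i q, qbit i q))))"
    unfolding P_def by (intro prod.cong refl) (use factor_facts(1)[OF rp qbit_le1] in auto)
  then show ?thesis unfolding D_def by simp
qed

lemma P_bound: "(cmod (P i j))\<^sup>2 \<le> D i * D j"
proof -
  have "(cmod (P i j))\<^sup>2 = (\<Prod>q<NN. (cmod (r q $$ (qbit i q, qbit j q)))\<^sup>2)"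
    unfolding P_def by (simp add: prod_norm[symmetric] prod_power_distrib)
  also have "\<dots> \<le> (\<Prod>q<NN. Re (r q $$ (qbit i q, qbit i q)) * Re (r q $$ (qbit j q, qbit j q)))"
    by (rule prod_mono) (use factor_facts(3)[OF rp qbit_le1 qbit_le1] in auto)
  also have "\<dots> = D i * D j" unfolding D_def by (rule prod.distrib)
  finally show ?thesis .
qed

lemma D_pair:
  assumes "\<And>q. q < NN \<Longrightarrow> (qbit a q = qbit a' q \<and> qbit b q = qbit b' q) \<or> (qbit a q = qbit b' q \<and> qbit b q = qbit a' q)"
  shows "D a * D b = D a' * D b'"
proof -
  have "D a * D b = (\<Prod>q<NN. Re (r q $$ (qbit a q, qbit a q)) * Re (r q $$ (qbit b q, qbit b q)))"
    unfolding D_def by (rule prod.distrib[symmetric])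
  also have "\<dots> = (\<Prod>q<NN. Re (r q $$ (qbit a' q, qbit a' q)) * Re (r q $$ (qbit b' q, qbit b' q)))"
  proof (intro prod.cong refl)
    fix q assume "q \<in> {..<NN}"
    then have "q < NN" by simp
    from assms[OF this]
    show "Re (r q $$ (qbit a q, qbit a q)) * Re (r q $$ (qbit b q, qbit b q)) = Re (r q $$ (qbit a' q, qbit a' q)) * Re (r q $$ (qbit b' q, qbit b' q))"
    proof (elim disjE conjE)
      assume "qbit a q = qbit a' q" "qbit b q = qbit b' q"
      then show ?thesis by simp
    next
      assume "qbit a q = qbit b' q" "qbit b q = qbit a' q"
      then show ?thesis by (simp add: mult.commute)
    qed
  qed
  also have "\<dots> = D a' * D b'" unfolding D_def by (rule prod.distrib)
  finally show ?thesis .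
qed

end


lemma sum_zero_terms:
  fixes p T :: "nat \<Rightarrow> real"
  assumes "\<And>l. l < n \<Longrightarrow> p l \<ge> 0" "\<And>l. l < n \<Longrightarrow> T l \<ge> 0" "(\<Sum>l<n. p l * T l) = 0"
    and "l < n" "p l > 0"
  shows "T l = 0"
proof -
  have "\<forall>l\<in>{..<n}. p l * T l = 0" using assms(1,2,3) by (subst sum_nonneg_eq_0_iff[symmetric]) auto
  then have "p l * T l = 0" using assms(4) by simp
  then show ?thesis using assms(5) by simp
qed

context qs
begin

lemma not_sep: "\<not> fully_separable N rho"
proof
  assume "fully_separable N rho"
  then obtain nn :: nat and p :: "nat \<Rightarrow> real" and r :: "nat \<Rightarrow> nat \<Rightarrow> complex mat" where
    p0: "\<forall>l<nn. p l \<ge> 0" and dens: "\<forall>l<nn. \<forall>q<N. density 2 (r l q)"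
    and rhoeq: "rho = msum (2 ^ N) (\<lambda>l. complex_of_real (p l) \<cdot>\<^sub>m tensor_qubits N (r l)) {..<nn}"
    unfolding fully_separable_def by blast
  have ps: "prodst N (r l)" if "l < nn" for l
    using dens that unfolding prodst_def density_def by blast
  define PP where "PP l = prodst.P N (r l)" for l
  define DD where "DD l = prodst.D N (r l)" for l
  have ent: "rho $$ (i, j) = (\<Sum>l<nn. complex_of_real (p l) * PP l i j)" if "i < 2 ^ N" "j < 2 ^ N" for i j
    unfolding rhoeq msum_def using that
    by (simp add: tensor_qubits_def) (intro sum.cong refl, simp add: PP_def prodst.P_def[OF ps])
  have reent: "Re (rho $$ (i, j)) = (\<Sum>l<nn. p l * Re (PP l i j))" if "i < 2 ^ N" "j < 2 ^ N" for i j
    unfolding ent[OF that] by (simp add: Re_sum)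
  have PPd: "PP l i i = complex_of_real (DD l i)" if "l < nn" for l i
    unfolding PP_def DD_def using prodst.P_diag[OF ps[OF that]] .
  have Dnn: "DD l i \<ge> 0" if "l < nn" for l i
    unfolding DD_def using prodst.D_nonneg[OF ps[OF that]] .
  have Pb: "(cmod (PP l i j))\<^sup>2 \<le> DD l i * DD l j" if "l < nn" for l i j
    unfolding PP_def DD_def using prodst.P_bound[OF ps[OF that]] .
  have S: "DD l a = DD l b" if ab: "a < 2 ^ N" "b < 2 ^ N" "num_ones N a = num_ones N b" and l: "l < nn" "p l > 0" for a b l
  proof -
    define T where "T l = DD l a + DD l b - 2 * Re (PP l a b)" for l
    have Tn: "T l \<ge> 0" if "l < nn" for l
      unfolding T_def by (rule key_ineq(1)[OF Dnn Dnn Pb]) (use that in auto)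
    have tt: "p l * T l = p l * DD l a + p l * DD l b - 2 * (p l * Re (PP l a b))" for l
      unfolding T_def by (simp add: algebra_simps)
    have ra: "Re (rho $$ (a, a)) = (\<Sum>l<nn. p l * DD l a)"
      unfolding reent[OF ab(1) ab(1)] by (intro sum.cong refl) (simp add: PPd)
    have rb: "Re (rho $$ (b, b)) = (\<Sum>l<nn. p l * DD l b)"
      unfolding reent[OF ab(2) ab(2)] by (intro sum.cong refl) (simp add: PPd)
    have "(\<Sum>l<nn. p l * T l) = Re (rho $$ (a, a)) + Re (rho $$ (b, b)) - 2 * Re (rho $$ (a, b))"
      unfolding tt ra rb reent[OF ab(1) ab(2)] by (simp add: sum.distrib sum_subtractf sum_distrib_left)
    also have "\<dots> = 0" using ab by (simp add: rho_entry)
    finally have sz: "(\<Sum>l<nn. p l * T l) = 0" .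
    have "T l = 0" by (rule sum_zero_terms[OF _ _ sz l]) (use p0 Tn in auto)
    then show ?thesis unfolding T_def using key_ineq(2)[OF Dnn Dnn Pb] l by blast
  qed
  define x where "x = R K K 0"
  define y where "y = R K 0 (K + 1)"
  define z0 where "z0 = R N 0 0"
  define F where "F = R N N 0"
  have KN: "K + 1 \<le> N" "K + (K + 1) \<le> N" using NK by auto
  have wx: "num_ones N x = K" unfolding x_def using num_ones_R[of K K 0] KN by simp
  have wy: "num_ones N y = K + 1" unfolding y_def using num_ones_R[of 0 K "K + 1"] KN by simp
  have wz: "num_ones N z0 = 0" unfolding z0_def using num_ones_R[of 0 N 0] by simp
  have wF: "num_ones N F = N" unfolding F_def using num_ones_R[of N N 0] by simp
  have X: "DD l x = DD l y" if l: "l < nn" "p l > 0" for l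
  proof -
    define T where "T l = DD l x + DD l y - 2 * Re (complex_of_real \<sigma> * PP l z0 F)" for l
    have pair: "DD l z0 * DD l F = DD l x * DD l y" if "l < nn" for l
      unfolding DD_def
    proof (rule prodst.D_pair[OF ps[OF that]])
      fix q assume q: "q < N"
      show "qbit z0 q = qbit x q \<and> qbit F q = qbit y q \<or> qbit z0 q = qbit y q \<and> qbit F q = qbit x q"
        unfolding x_def y_def z0_def F_def qbit_R[OF q] using q NK by auto
    qed
    have Tn: "T l \<ge> 0" if "l < nn" for l
    proof -
      have "(cmod (complex_of_real \<sigma> * PP l z0 F))\<^sup>2 \<le> DD l x * DD l y"
        using Pb[OF that, of z0 F] pair[OF that] sig_abs by (simp add: norm_mult)
      then show ?thesis unfolding T_def by (rule key_ineq(1)[OF Dnn[OF that] Dnn[OF that]])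
    qed
    have lt: "x < 2 ^ N" "y < 2 ^ N" "z0 < 2 ^ N" "F < 2 ^ N" unfolding x_def y_def z0_def F_def by (simp_all add: R_lt)
    have tt: "p l * T l = p l * DD l x + p l * DD l y - 2 * \<sigma> * (p l * Re (PP l z0 F))" for l
      unfolding T_def by (simp add: algebra_simps)
    have ra: "Re (rho $$ (x, x)) = (\<Sum>l<nn. p l * DD l x)"
      unfolding reent[OF lt(1) lt(1)] by (intro sum.cong refl) (simp add: PPd)
    have rb: "Re (rho $$ (y, y)) = (\<Sum>l<nn. p l * DD l y)"
      unfolding reent[OF lt(2) lt(2)] by (intro sum.cong refl) (simp add: PPd)
    have "(\<Sum>l<nn. p l * T l) = Re (rho $$ (x, x)) + Re (rho $$ (y, y)) - 2 * \<sigma> * Re (rho $$ (z0, F))"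
      unfolding tt ra rb reent[OF lt(3) lt(4)] by (simp add: sum.distrib sum_subtractf sum_distrib_left)
    also have "\<dots> = 0"
      using lt wx wy wz wF N_pos f0 f_m1 sig2 by (simp add: rho_entry Rf_def)
    finally have sz: "(\<Sum>l<nn. p l * T l) = 0" .
    have "T l = 0" by (rule sum_zero_terms[OF _ _ sz l]) (use p0 Tn in auto)
    moreover have "(cmod (complex_of_real \<sigma> * PP l z0 F))\<^sup>2 \<le> DD l x * DD l y"
      using Pb[OF l(1), of z0 F] pair[OF l(1)] sig_abs by (simp add: norm_mult)
    ultimately show ?thesis unfolding T_def using key_ineq(2)[OF Dnn[OF l(1)] Dnn[OF l(1)]] by blast
  qed
  define u where "u = R K (K - 1) 0"
  define x' where "x' = R K (K - 1) 1"
  define xx where "xx = R K K 1"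
  define u' where "u' = R K (K - 2) 0"
  define u'' where "u'' = R (K - 1) (K - 2) 1"
  have lt2: "u < 2 ^ N" "x' < 2 ^ N" "xx < 2 ^ N" "u' < 2 ^ N" "u'' < 2 ^ N" "x < 2 ^ N" "y < 2 ^ N"
    unfolding u_def x'_def xx_def u'_def u''_def x_def y_def by (simp_all add: R_lt)
  have wu: "num_ones N u = K - 1" unfolding u_def using num_ones_R[of "K - 1" K 0] KN by simp
  have wx': "num_ones N x' = K" unfolding x'_def using num_ones_R[of "K - 1" K 1] KN K1 by simp
  have wxx: "num_ones N xx = K + 1" unfolding xx_def using num_ones_R[of K K 1] KN by simp
  have wu'': "num_ones N u'' = K - 1" unfolding u''_def using num_ones_R[of "K - 2" "K - 1" 1] KN K1 by simp
  have main: "DD l u = DD l x" if l: "l < nn" "p l > 0" for l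
  proof -
    have p1: "DD l u * DD l xx = DD l x * DD l x'"
      unfolding DD_def
    proof (rule prodst.D_pair[OF ps[OF l(1)]])
      fix q assume q: "q < N"
      show "qbit u q = qbit x q \<and> qbit xx q = qbit x' q \<or> qbit u q = qbit x' q \<and> qbit xx q = qbit x q"
        unfolding u_def x_def xx_def x'_def qbit_R[OF q] using q NK K1 by auto
    qed
    have p2: "DD l u' * DD l x = DD l u * DD l u''"
      unfolding DD_def
    proof (rule prodst.D_pair[OF ps[OF l(1)]])
      fix q assume q: "q < N"
      show "qbit u' q = qbit u q \<and> qbit x q = qbit u'' q \<or> qbit u' q = qbit u'' q \<and> qbit x q = qbit u q"
        unfolding u_def x_def u'_def u''_def qbit_R[OF q] using q NK K1 by auto
    qed
    have e1: "DD l x' = DD l x" using S[OF lt2(2) lt2(6) _ l] wx' wx by simp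
    have e2: "DD l xx = DD l y" using S[OF lt2(3) lt2(7) _ l] wxx wy by simp
    have e3: "DD l u'' = DD l u" using S[OF lt2(5) lt2(1) _ l] wu'' wu by simp
    have e4: "DD l x = DD l y" by (rule X[OF l])
    have q1: "DD l u * DD l x = DD l x * DD l x" using p1 e1 e2 e4 by simp
    have q2: "DD l u' * DD l x = DD l u * DD l u" using p2 e3 by simp
    show ?thesis
    proof (cases "DD l x = 0")
      case True
      then have "DD l u * DD l u = 0" using q2 by simp
      then show ?thesis using True by simp
    next
      case False
      then show ?thesis using q1 by simp
    qed
  qed
  have "Re (rho $$ (u, u)) = Re (rho $$ (x, x))"
  proof -
    have "Re (rho $$ (u, u)) = (\<Sum>l<nn. p l * DD l u)" unfolding reent[OF lt2(1) lt2(1)] by (simp add: PPd)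
    also have "\<dots> = (\<Sum>l<nn. p l * DD l x)"
    proof (rule sum.cong[OF refl])
      fix l assume "l \<in> {..<nn}"
      then have l: "l < nn" by simp
      show "p l * DD l u = p l * DD l x"
      proof (cases "p l > 0")
        case True then show ?thesis using main[OF l] by simp
      next
        case False then have "p l = 0" using p0 l by force
        then show ?thesis by simp
      qed
    qed
    also have "\<dots> = Re (rho $$ (x, x))" unfolding reent[OF lt2(6) lt2(6)] by (simp add: PPd)
    finally show ?thesis .
  qed
  then have "s * f (int K - int (K - 1)) = s * f 0" using lt2 wu wx by (simp add: rho_entry Rf_diag)
  moreover have "int K - int (K - 1) = 1" using K1 by simp
  ultimately show False using s_pos f0 f1 Zp by simp
qed

end


lemma rank_upper_mat:
  fixes fv gv :: "'b \<Rightarrow> nat \<Rightarrow> complex"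
  assumes fin: "finite T"
  shows "vec_space.rank n (mat n n (\<lambda>(i, j). \<Sum>t\<in>T. fv t i * gv t j)) \<le> card T"
  using fin
proof (induction T rule: finite_induct)
  case empty
  have "mat n n (\<lambda>(i, j). \<Sum>t\<in>{}. fv t i * gv t j) = 0\<^sub>m n n" by (rule eq_matI) auto
  then show ?case using vec_space.rank_0I by (metis card.empty le_refl)
next
  case (insert t T)
  define A1 where "A1 = mat n n (\<lambda>(i, j). fv t i * gv t j)"
  define A2 where "A2 = mat n n (\<lambda>(i, j). \<Sum>t\<in>T. fv t i * gv t j)"
  have "mat n n (\<lambda>(i, j). \<Sum>t\<in>insert t T. fv t i * gv t j) = A1 + A2"
    unfolding A1_def A2_def by (rule eq_matI) (use insert in auto)
  moreover have "vec_space.rank n A1 \<le> 1"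
    by (rule vec_space.rank_le_1_product_entries[where f = "fv t" and g = "gv t" and nc = n]) (auto simp: A1_def)
  moreover have "vec_space.rank n (A1 + A2) \<le> vec_space.rank n A1 + vec_space.rank n A2"
    by (rule vec_space.rank_subadditive) (auto simp: A1_def A2_def)
  ultimately show ?case using insert A2_def by simp
qed

lemma rank_upper:
  fixes X :: "complex mat" and fv gv :: "'b \<Rightarrow> nat \<Rightarrow> complex"
  assumes X: "X \<in> carrier_mat n n" and fin: "finite T"
    and ent: "\<And>i j. i < n \<Longrightarrow> j < n \<Longrightarrow> X $$ (i, j) = (\<Sum>t\<in>T. fv t i * gv t j)"
  shows "vec_space.rank n X \<le> card T"
proof -
  have "X = mat n n (\<lambda>(i, j). \<Sum>t\<in>T. fv t i * gv t j)"
    by (rule eq_matI) (use X ent in auto)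
  then show ?thesis using rank_upper_mat[OF fin] by simp
qed

lemma rank_lower:
  fixes X :: "complex mat" and \<phi> :: "nat \<Rightarrow> nat"
  assumes X: "X \<in> carrier_mat n n" and \<phi>: "\<And>k. k < r \<Longrightarrow> \<phi> k < n"
    and ker: "\<And>c. \<forall>i<n. (\<Sum>k<r. X $$ (i, \<phi> k) * c k) = 0 \<Longrightarrow> \<forall>k<r. c k = 0"
  shows "r \<le> vec_space.rank n X"
proof -
  define S where "S = mat n r (\<lambda>(i, k). X $$ (i, \<phi> k))"
  have Sc: "S \<in> carrier_mat n r" unfolding S_def by simp
  have Sv: "(S *\<^sub>v v) $ i = (\<Sum>k<r. X $$ (i, \<phi> k) * v $ k)" if "i < n" "v \<in> carrier_vec r" for i v
    using that unfolding S_def by (auto simp: mult_mat_vec_def scalar_prod_def atLeast0LessThan intro!: sum.cong)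
  have kerS: "v = 0\<^sub>v r" if v: "v \<in> carrier_vec r" and Sv0: "S *\<^sub>v v = 0\<^sub>v n" for v
  proof -
    have "\<forall>i<n. (\<Sum>k<r. X $$ (i, \<phi> k) * v $ k) = 0"
    proof (intro allI impI)
      fix i assume i: "i < n"
      have "(S *\<^sub>v v) $ i = 0" using Sv0 i by simp
      then show "(\<Sum>k<r. X $$ (i, \<phi> k) * v $ k) = 0" using Sv[OF i v] by simp
    qed
    then have "\<forall>k<r. v $ k = 0" by (rule ker)
    then show ?thesis using v by (intro eq_vecI) auto
  qed
  have colS: "col S k = col X (\<phi> k)" if "k < r" for k
    using that \<phi>[OF that] X Sc unfolding S_def by (intro eq_vecI) auto
  have dist: "distinct (cols S)"
  proof (subst distinct_conv_nth, intro allI impI)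
    fix a b assume a: "a < length (cols S)" and b: "b < length (cols S)" and ab: "a \<noteq> b"
    then have ar: "a < r" and br: "b < r" using Sc by auto
    show "cols S ! a \<noteq> cols S ! b"
    proof
      assume eq: "cols S ! a = cols S ! b"
      define v where "v = vec r (\<lambda>k. if k = a then 1 else if k = b then - 1 else (0::complex))"
      have vc: "v \<in> carrier_vec r" unfolding v_def by simp
      have "S *\<^sub>v v = 0\<^sub>v n"
      proof (rule eq_vecI)
        fix i assume "i < dim_vec (0\<^sub>v n :: complex vec)"
        then have i: "i < n" by simp
        have "(S *\<^sub>v v) $ i = (\<Sum>k<r. X $$ (i, \<phi> k) * v $ k)" by (rule Sv[OF i vc])
        also have "\<dots> = X $$ (i, \<phi> a) - X $$ (i, \<phi> b)"
        proof -
          have "(\<Sum>k<r. X $$ (i, \<phi> k) * v $ k) = (\<Sum>k<r. (if k = a then X $$ (i, \<phi> a) else 0) - (if k = b then X $$ (i, \<phi> b) else 0))"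
            unfolding v_def using ab by (intro sum.cong refl) auto
          also have "\<dots> = X $$ (i, \<phi> a) - X $$ (i, \<phi> b)" using ar br by (simp add: sum_subtractf)
          finally show ?thesis .
        qed
        also have "\<dots> = 0"
        proof -
          have "col S a $ i = col S b $ i" using eq ar br Sc by simp
          then show ?thesis using i ar br \<phi> X unfolding colS[OF ar] colS[OF br] by simp
        qed
        finally show "(S *\<^sub>v v) $ i = 0\<^sub>v n $ i" using i by simp
      qed (use Sc in simp)
      then have "v = 0\<^sub>v r" by (rule kerS[OF vc])
      moreover have "v $ a = 1" unfolding v_def using ar by simp
      ultimately show False using ar by simp
    qed
  qed
  have indpt: "\<not> module.lin_dep class_ring (module_vec TYPE(complex) n) (set (cols S))"
  proof
    assume ld: "module.lin_dep class_ring (module_vec TYPE(complex) n) (set (cols S))"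
    obtain v where v: "v \<in> carrier_vec r" "v \<noteq> 0\<^sub>v r" "S *\<^sub>v v = 0\<^sub>v n"
      using vec_space.lin_depE[OF Sc ld dist] by blast
    then show False using kerS by blast
  qed
  have sub: "set (cols S) \<subseteq> set (cols X)"
  proof
    fix w assume "w \<in> set (cols S)"
    then obtain k where k: "k < r" "w = cols S ! k" using Sc by (auto simp: in_set_conv_nth)
    then have "w = col X (\<phi> k)" using colS Sc by simp
    moreover have "col X (\<phi> k) \<in> set (cols X)" using nth_mem[of "\<phi> k" "cols X"] \<phi>[OF k(1)] X by simp
    ultimately show "w \<in> set (cols X)" by simp
  qed
  have "card (set (cols S)) = r" using distinct_card[OF dist] Sc by simp
  then show ?thesis using vec_space.rank_ge_card_indpt[OF X sub indpt] by simp
qed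

lemma sum_two_pts:
  fixes g :: "nat \<Rightarrow> 'a::comm_monoid_add"
  assumes "a < r" "b < r" "a \<noteq> b" "\<And>k. k < r \<Longrightarrow> k \<noteq> a \<Longrightarrow> k \<noteq> b \<Longrightarrow> g k = 0"
  shows "(\<Sum>k<r. g k) = g a + g b"
proof -
  have "(\<Sum>k<r. g k) = (\<Sum>k\<in>{a, b}. g k)"
    by (rule sum.mono_neutral_right) (use assms in auto)
  then show ?thesis using assms(3) by simp
qed

lemma sum_one_pt:
  fixes g :: "nat \<Rightarrow> 'a::comm_monoid_add"
  assumes "a < r" "\<And>k. k < r \<Longrightarrow> k \<noteq> a \<Longrightarrow> g k = 0"
  shows "(\<Sum>k<r. g k) = g a"
proof -
  have "(\<Sum>k<r. g k) = (\<Sum>k\<in>{a}. g k)"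
    by (rule sum.mono_neutral_right) (use assms in auto)
  then show ?thesis by simp
qed


lemma solve2:
  fixes a b c d x y :: complex
  assumes "a * x + b * y = 0" "c * x + d * y = 0" "a * d - b * c \<noteq> 0"
  shows "x = 0 \<and> y = 0"
proof -
  have "(a * d - b * c) * x = d * (a * x + b * y) - b * (c * x + d * y)" by (simp add: algebra_simps)
  then have x: "x = 0" using assms by simp
  have "(a * d - b * c) * y = a * (c * x + d * y) - c * (a * x + b * y)" by (simp add: algebra_simps)
  then have "y = 0" using assms by simp
  with x show ?thesis by simp
qed

lemma sum_ind:
  fixes X :: "nat \<Rightarrow> complex"
  assumes "finite A" "w \<in> A"
  shows "(\<Sum>k\<in>A. (if w = k then 1 else 0) * X k) = X w"
proof -
  have "(\<Sum>k\<in>A. (if w = k then 1 else 0) * X k) = (\<Sum>k\<in>A. if w = k then X k else 0)"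
    by (intro sum.cong refl) simp
  then show ?thesis using assms by simp
qed

context qs
begin

lemma rank_rho: "mrank (2 ^ N) rho = N + 1"
proof (rule antisym)
  show "mrank (2 ^ N) rho \<le> N + 1"
  proof -
    have "vec_space.rank (2 ^ N) rho \<le> card {0..N}"
    proof (rule rank_upper[OF rho_carrier, where fv = "\<lambda>k i. if num_ones N i = k then 1 else 0"
          and gv = "\<lambda>k j. complex_of_real (s * Rf k (num_ones N j))"])
      fix i j :: nat assume ij: "i < 2 ^ N" "j < 2 ^ N"
      show "rho $$ (i, j) = (\<Sum>k\<in>{0..N}. (if num_ones N i = k then 1 else 0) * complex_of_real (s * Rf k (num_ones N j)))"
        using num_ones_le[of N i] by (subst sum_ind) (simp_all add: rho_entry[OF ij])
    qed simp
    then show ?thesis unfolding mrank_def by simp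
  qed
  show "N + 1 \<le> mrank (2 ^ N) rho"
    unfolding mrank_def
  proof (rule rank_lower[OF rho_carrier, where \<phi> = "\<lambda>k. R N k 0"])
    show "R N k 0 < 2 ^ N" for k by (rule R_lt)
    fix c :: "nat \<Rightarrow> complex"
    assume h: "\<forall>i<2 ^ N. (\<Sum>k<N + 1. rho $$ (i, R N k 0) * c k) = 0"
    have wR: "num_ones N (R N k 0) = k" if "k \<le> N" for k using num_ones_R[of k N 0] that by simp
    have row: "(\<Sum>k<N + 1. complex_of_real (s * Rf m k) * c k) = 0" if m: "m \<le> N" for m
    proof -
      have "(\<Sum>k<N + 1. rho $$ (R N m 0, R N k 0) * c k) = 0" using h R_lt by blast
      moreover have "rho $$ (R N m 0, R N k 0) = complex_of_real (s * Rf m k)" if "k < N + 1" for k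
        using that m by (simp add: rho_entry R_lt wR)
      ultimately show ?thesis by simp
    qed
    have mid: "c m = 0" if m: "0 < m" "m < N" for m
    proof -
      have "(\<Sum>k<N + 1. complex_of_real (s * Rf m k) * c k) = complex_of_real (s * Rf m m) * c m"
        by (rule sum_one_pt) (use m in \<open>auto simp: Rf_def\<close>)
      then have "complex_of_real (s * f (int K - int m)) * c m = 0" using row[of m] m by (simp add: Rf_diag)
      moreover have "s * f (int K - int m) \<noteq> 0" using s_pos f_ge1[of "int K - int m"] by simp
      ultimately show ?thesis by simp
    qed
    define A where "A = f (int K)"
    have A1: "A > 1" unfolding A_def using K1 by (intro f_gt1) auto
    have fKN: "f (int K - int N) = A" unfolding A_def using f_refl[of N] by simp
    have e0: "complex_of_real A * c 0 + complex_of_real \<sigma> * c N = 0"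
    proof -
      have "(\<Sum>k<N + 1. complex_of_real (s * Rf 0 k) * c k) = complex_of_real (s * Rf 0 0) * c 0 + complex_of_real (s * Rf 0 N) * c N"
        by (rule sum_two_pts) (use N_pos in \<open>auto simp: Rf_def\<close>)
      then have "complex_of_real s * (complex_of_real A * c 0 + complex_of_real \<sigma> * c N) = 0"
        using row[of 0] N_pos unfolding A_def by (simp add: Rf_def algebra_simps)
      then show ?thesis using s_pos by simp
    qed
    have eN: "complex_of_real \<sigma> * c 0 + complex_of_real A * c N = 0"
    proof -
      have "(\<Sum>k<N + 1. complex_of_real (s * Rf N k) * c k) = complex_of_real (s * Rf N 0) * c 0 + complex_of_real (s * Rf N N) * c N"
        by (rule sum_two_pts) (use N_pos in \<open>auto simp: Rf_def\<close>)
      then have "complex_of_real s * (complex_of_real \<sigma> * c 0 + complex_of_real A * c N) = 0"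
        using row[of N] N_pos fKN by (simp add: Rf_def algebra_simps)
      then show ?thesis using s_pos by simp
    qed
    have det: "complex_of_real A * complex_of_real A - complex_of_real \<sigma> * complex_of_real \<sigma> \<noteq> 0"
    proof -
      have "A * A > 1" using A1 by (rule less_1_mult) (rule A1)
      then have "A * A - \<sigma> * \<sigma> \<noteq> 0" using sig2 by simp
      then show ?thesis by (metis of_real_diff of_real_eq_0_iff of_real_mult)
    qed
    have ends: "c 0 = 0 \<and> c N = 0" by (rule solve2[OF e0 eN det])
    show "\<forall>k<N + 1. c k = 0"
    proof (intro allI impI)
      fix k assume "k < N + 1"
      then consider "k = 0" | "k = N" | "0 < k \<and> k < N" by linarith
      then show "c k = 0" using ends mid by cases auto
    qed
  qed
qed

end


lemma sum_class_prod:
  fixes x y :: complex and h :: "nat \<Rightarrow> int"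
  assumes "finite D"
  shows "(\<Sum>\<delta>\<in>D. (if h i = \<delta> then x else 0) * (if h j = \<delta> then y else 0)) = (if h i = h j \<and> h i \<in> D then x * y else 0)"
proof -
  have "(\<Sum>\<delta>\<in>D. (if h i = \<delta> then x else 0) * (if h j = \<delta> then y else 0)) = (\<Sum>\<delta>\<in>D. if h i = \<delta> then (if h j = h i then x * y else 0) else 0)"
    by (intro sum.cong refl) auto
  also have "\<dots> = (if h i = h j \<and> h i \<in> D then x * y else 0)" using assms by (simp add: sum.delta)
  finally show ?thesis .
qed

context qs
begin

lemma msz_init: "m \<le> N \<Longrightarrow> msz N {..<m} = m"
  unfolding msz_def using count_ind[of 0 m N] by simp

lemma Rf_pt:
  "Rf (mo N M j + mc N M i) (mo N M i + mc N M j)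
    = (if dd M i = dd M j then f (int K - int (mo N M j + mc N M i)) else 0)
      + \<sigma> * ((if dd M i = - int (msz N M) \<and> dd M j = int N - int (msz N M) then 1 else 0)
           + (if dd M i = int N - int (msz N M) \<and> dd M j = - int (msz N M) then 1 else 0))"
proof -
  define m' where "m' = msz N M"
  have m'N: "m' \<le> N" unfolding m'_def by (rule msz_le)
  have moB: "mo N M x \<le> m'" for x unfolding m'_def by (rule mo_le)
  have mcB: "mc N M x \<le> N - m'" for x unfolding m'_def by (rule mc_le)
  have c1: "(mo N M j + mc N M i = 0 \<and> mo N M i + mc N M j = N) \<longleftrightarrow> (dd M i = - int m' \<and> dd M j = int N - int m')"
    unfolding dd_def using moB[of i] mcB[of j] moB[of j] mcB[of i] m'N by auto
  have c2: "(mo N M j + mc N M i = N \<and> mo N M i + mc N M j = 0) \<longleftrightarrow> (dd M i = int N - int m' \<and> dd M j = - int m')"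
    unfolding dd_def using moB[of i] mcB[of j] moB[of j] mcB[of i] m'N by auto
  have c3: "(mo N M j + mc N M i = mo N M i + mc N M j) \<longleftrightarrow> dd M i = dd M j"
    unfolding dd_def by auto
  show ?thesis unfolding Rf_def c1 c2 c3 m'_def[symmetric] ..
qed

lemma dd_R: "p \<le> m \<Longrightarrow> m + a \<le> N \<Longrightarrow> dd {..<m} (R m p a) = int a - int p"
  unfolding dd_def using mo_R[of p m a] mc_R[of p m a] by simp

lemma dd_range: "m \<le> N \<Longrightarrow> - int m \<le> dd {..<m} i \<and> dd {..<m} i \<le> int N - int m"
  unfolding dd_def using mo_le[of N "{..<m}" i] mc_le[of N "{..<m}" i] msz_init[of m] by auto

lemma dd_E1: "m \<le> N \<Longrightarrow> dd {..<m} i = - int m \<Longrightarrow> mo N {..<m} i = m \<and> mc N {..<m} i = 0"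
  unfolding dd_def using mo_le[of N "{..<m}" i] msz_init[of m] by auto

lemma dd_E2: "m \<le> N \<Longrightarrow> dd {..<m} i = int N - int m \<Longrightarrow> mo N {..<m} i = 0 \<and> mc N {..<m} i = N - m"
  unfolding dd_def using mc_le[of N "{..<m}" i] msz_init[of m] by auto

lemma rank_pt_upper:
  assumes m: "1 \<le> m" "m \<le> K"
  shows "mrank (2 ^ N) (ptrans N {..<m} rho) \<le> (if m = K then 2 * N - 1 else 2 * N)"
proof -
  define n where "n = (2::nat) ^ N"
  have mN: "m \<le> N" using m NK by simp
  define Dl where "Dl = {1 - int m .. int N - int m - 1}"
  have cD: "card Dl = N - 1" unfolding Dl_def using mN by simp
  have fD: "finite Dl" unfolding Dl_def by simp
  define h where "h = dd {..<m}"
  define a where "a i = exp (- (real (num_ones N i) * mu))" for i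
  define b where "b i = exp (real (num_ones N i) * mu)" for i
  define X1 where "X1 = mat n n (\<lambda>(i, j). \<Sum>\<delta>\<in>Dl. (if h i = \<delta> then complex_of_real (a i) else 0) * (if h j = \<delta> then complex_of_real (s * cA * a j) else 0))"
  define X2 where "X2 = mat n n (\<lambda>(i, j). \<Sum>\<delta>\<in>Dl. (if h i = \<delta> then complex_of_real (b i) else 0) * (if h j = \<delta> then complex_of_real (s * cB * b j) else 0))"
  define e1 where "e1 i = (if h i = - int m then 1 else 0 :: complex)" for i
  define e2 where "e2 i = (if h i = int N - int m then 1 else 0 :: complex)" for i
  define c0 where "c0 = complex_of_real (f (int K - int m))"
  define sg where "sg = complex_of_real \<sigma>"
  define fv where "fv t i = (if m = K then e1 i + sg * e2 i else if t = (0::nat) then e1 i else e2 i)" for t i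
  define gv where "gv t j = complex_of_real s * (if m = K then e1 j + sg * e2 j else if t = (0::nat) then c0 * e1 j + sg * e2 j else sg * e1 j + c0 * e2 j)" for t j
  define T3 where "T3 = (if m = K then {0::nat} else {0, 1})"
  define X3 where "X3 = mat n n (\<lambda>(i, j). \<Sum>t\<in>T3. fv t i * gv t j)"
  have ent: "ptrans N {..<m} rho = X1 + X2 + X3"
  proof (rule eq_matI)
    show "dim_row (ptrans N {..<m} rho) = dim_row (X1 + X2 + X3)" "dim_col (ptrans N {..<m} rho) = dim_col (X1 + X2 + X3)"
      unfolding X1_def X2_def X3_def n_def ptrans_def by simp_all
    fix i j assume "i < dim_row (X1 + X2 + X3)" "j < dim_col (X1 + X2 + X3)"
    then have ij: "i < n" "j < n" unfolding X1_def X2_def X3_def by auto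
    have x1: "X1 $$ (i, j) = (if h i = h j \<and> h i \<in> Dl then complex_of_real (s * cA * a i * a j) else 0)"
      unfolding X1_def using ij by (auto simp: sum_class_prod[OF fD] mult.assoc mult.left_commute)
    have x2: "X2 $$ (i, j) = (if h i = h j \<and> h i \<in> Dl then complex_of_real (s * cB * b i * b j) else 0)"
      unfolding X2_def using ij by (auto simp: sum_class_prod[OF fD] mult.assoc mult.left_commute)
    have x3: "X3 $$ (i, j) = (\<Sum>t\<in>T3. fv t i * gv t j)" unfolding X3_def using ij by simp
    have sumij: "(X1 + X2 + X3) $$ (i, j) = X1 $$ (i, j) + X2 $$ (i, j) + X3 $$ (i, j)"
      using ij unfolding X1_def X2_def X3_def by simp
    have lhs: "ptrans N {..<m} rho $$ (i, j) = complex_of_real (s * ((if h i = h j then f (int K - int (mo N {..<m} j + mc N {..<m} i)) else 0)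
      + \<sigma> * ((if h i = - int m \<and> h j = int N - int m then 1 else 0) + (if h i = int N - int m \<and> h j = - int m then 1 else 0))))"
      using ij unfolding n_def h_def by (simp add: rho_pt_entry Rf_pt msz_init[OF mN])
    have rh: "- int m \<le> h x \<and> h x \<le> int N - int m" for x unfolding h_def using dd_range[OF mN] .
    have neq: "- int m \<noteq> int N - int m" using N_pos by simp
    have fKm: "f (int K - int (N - m)) = f (int K - int m)" using f_refl[OF mN] .
    have sg2: "sg * sg = 1" unfolding sg_def using sig2 by (metis of_real_1 of_real_mult)
    consider (ne) "h i \<noteq> h j" | (mid) "h i = h j" "h i \<in> Dl" | (ex1) "h i = h j" "h i = - int m" | (ex2) "h i = h j" "h i = int N - int m"
      using rh[of i] unfolding Dl_def by force
    then show "ptrans N {..<m} rho $$ (i, j) = (X1 + X2 + X3) $$ (i, j)"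
    proof cases
      case ne
      have "h i \<notin> Dl \<or> h j \<notin> Dl \<or> True" by simp
      have "(\<Sum>t\<in>T3. fv t i * gv t j) = complex_of_real (s * \<sigma> * ((if h i = - int m \<and> h j = int N - int m then 1 else 0) + (if h i = int N - int m \<and> h j = - int m then 1 else 0)))"
        unfolding T3_def fv_def gv_def e1_def e2_def sg_def c0_def using ne neq by (auto simp: algebra_simps)
      then show ?thesis using ij ne unfolding lhs sumij x1 x2 x3 by (simp add: algebra_simps)
    next
      case mid
      have nE: "h i \<noteq> - int m" "h i \<noteq> int N - int m" using mid unfolding Dl_def by auto
      have "2 * (mo N {..<m} j + mc N {..<m} i) = num_ones N i + num_ones N j"
        using mid(1) unfolding h_def dd_def num_ones_mo_mc[of N _ "{..<m}"] by presburger
      then have fs: "f (int K - int (mo N {..<m} j + mc N {..<m} i)) = cA * a i * a j + cB * b i * b j"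
        unfolding a_def b_def using f_split[OF \<open>2 * (mo N {..<m} j + mc N {..<m} i) = num_ones N i + num_ones N j\<close>] by (simp only: mult.assoc)
      have "(\<Sum>t\<in>T3. fv t i * gv t j) = 0"
        unfolding T3_def fv_def gv_def e1_def e2_def using mid nE by auto
      then show ?thesis using ij mid nE unfolding lhs sumij x1 x2 x3 fs
        by (simp add: algebra_simps)
    next
      case ex1
      have nD: "h i \<notin> Dl" using ex1 unfolding Dl_def by auto
      have E1: "mo N {..<m} j = m" "mc N {..<m} i = 0" using dd_E1[OF mN, of i] dd_E1[OF mN, of j] ex1 unfolding h_def by auto
      have "(\<Sum>t\<in>T3. fv t i * gv t j) = complex_of_real s * c0"
        unfolding T3_def fv_def gv_def e1_def e2_def using ex1 neq m f0 by (auto simp: c0_def)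
      then show ?thesis using ij ex1 nD neq unfolding lhs sumij x1 x2 x3 E1 c0_def
        by simp
    next
      case ex2
      have nD: "h i \<notin> Dl" using ex2 unfolding Dl_def by auto
      have E2: "mo N {..<m} j = 0" "mc N {..<m} i = N - m" using dd_E2[OF mN, of i] dd_E2[OF mN, of j] ex2 unfolding h_def by auto
      have "(\<Sum>t\<in>T3. fv t i * gv t j) = complex_of_real s * c0"
        unfolding T3_def fv_def gv_def e1_def e2_def using ex2 neq m f0 sg2 by (auto simp: c0_def)
      then show ?thesis using ij ex2 nD neq unfolding lhs sumij x1 x2 x3 E2 c0_def
        by (simp add: fKm)
    qed
  qed
  have "vec_space.rank n X1 \<le> card Dl" unfolding X1_def by (rule rank_upper_mat[OF fD])
  then have r1: "vec_space.rank n X1 \<le> N - 1" using cD by simp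
  have "vec_space.rank n X2 \<le> card Dl" unfolding X2_def by (rule rank_upper_mat[OF fD])
  then have r2: "vec_space.rank n X2 \<le> N - 1" using cD by simp
  have r3: "vec_space.rank n X3 \<le> card T3" unfolding X3_def by (rule rank_upper_mat) (simp add: T3_def)
  have c1: "X1 \<in> carrier_mat n n" "X2 \<in> carrier_mat n n" "X3 \<in> carrier_mat n n" unfolding X1_def X2_def X3_def by auto
  have "vec_space.rank n (X1 + X2 + X3) \<le> vec_space.rank n (X1 + X2) + vec_space.rank n X3"
    by (rule vec_space.rank_subadditive) (use c1 in auto)
  moreover have "vec_space.rank n (X1 + X2) \<le> vec_space.rank n X1 + vec_space.rank n X2"
    by (rule vec_space.rank_subadditive) (use c1 in auto)
  ultimately have "vec_space.rank n (X1 + X2 + X3) \<le> (N - 1) + (N - 1) + card T3" using r1 r2 r3 by linarith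
  moreover have "(N - 1) + (N - 1) + card T3 = (if m = K then 2 * N - 1 else 2 * N)"
    unfolding T3_def using N_pos by auto
  ultimately show ?thesis unfolding mrank_def ent n_def by simp
qed

end


context qs
begin

lemma rank_pt_lower:
  assumes m: "1 \<le> m" "m \<le> K"
  shows "(if m = K then 2 * N - 1 else 2 * N) \<le> mrank (2 ^ N) (ptrans N {..<m} rho)"
proof -
  define n where "n = (2::nat) ^ N"
  have mN: "m \<le> N" "m < N" using m NK by simp_all
  define h where "h = dd {..<m}"
  define MO where "MO = mo N {..<m}"
  define MC where "MC = mc N {..<m}"
  define X where "X = ptrans N {..<m} rho"
  have Xe: "X $$ (i, j) = complex_of_real (s * ((if h i = h j then f (int K - int (MO j + MC i)) else 0)
      + \<sigma> * ((if h i = - int m \<and> h j = int N - int m then 1 else 0) + (if h i = int N - int m \<and> h j = - int m then 1 else 0))))"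
    if "i < n" "j < n" for i j
    using that unfolding X_def n_def h_def MO_def MC_def by (simp add: rho_pt_entry Rf_pt msz_init[OF mN(1)])
  define pa where "pa t = (if m \<le> t then 0 else m - t)" for t
  define qa where "qa t = (if m \<le> t then t - m else 0)" for t
  define al where "al t = R m (pa t) (qa t)" for t
  define be where "be t = R m (pa t + 1) (qa t + 1)" for t
  define e1 where "e1 = R m m 0"
  define e2 where "e2 = R m 0 (N - m)"
  define \<phi> where "\<phi> k = (if k < N - 1 then al (k + 1) else if k < 2 * N - 2 then be (k + 2 - N) else if k = 2 * N - 2 then e2 else e1)" for k
  define cls where "cls k = (if k < N - 1 then k + 1 else if k < 2 * N - 2 then k + 2 - N else if k = 2 * N - 2 then N else 0)" for k
  define r where "r = (if m = K then 2 * N - 1 else 2 * N)"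
  have valid: "pa t + 1 \<le> m" "m + (qa t + 1) \<le> N" if "1 \<le> t" "t \<le> N - 1" for t
    using that mN m unfolding pa_def qa_def by auto
  have moal: "MO (al t) = pa t" "MC (al t) = qa t" "MO (be t) = pa t + 1" "MC (be t) = qa t + 1"
    if "1 \<le> t" "t \<le> N - 1" for t
    using valid[OF that] unfolding MO_def MC_def al_def be_def by (simp_all add: mo_R mc_R)
  have hal: "h (al t) = int t - int m" "h (be t) = int t - int m" if "1 \<le> t" "t \<le> N - 1" for t
    using valid[OF that] that unfolding h_def al_def be_def pa_def qa_def by (auto simp: dd_R)
  have moe: "MO e1 = m" "MC e1 = 0" "MO e2 = 0" "MC e2 = N - m"
    using mN unfolding MO_def MC_def e1_def e2_def by (simp_all add: mo_R mc_R)
  have he: "h e1 = - int m" "h e2 = int N - int m" using mN unfolding h_def e1_def e2_def by (simp_all add: dd_R)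
  have \<phi>n: "\<phi> k < n" for k unfolding \<phi>_def al_def be_def e1_def e2_def n_def by (simp add: R_lt)
  have hphi: "h (\<phi> k) = int (cls k) - int m" if kk: "k < 2 * N" for k
  proof -
    consider "k < N - 1" | "N - 1 \<le> k" "k < 2 * N - 2" | "k = 2 * N - 2" | "k = 2 * N - 1"
      by (insert kk, cases "k < N - 1"; cases "k < 2 * N - 2"; cases "k = 2 * N - 2") auto
    then show ?thesis
    proof cases
      case 1 then show ?thesis unfolding \<phi>_def cls_def using hal[of "k + 1"] N_pos by auto
    next
      case 2 then show ?thesis unfolding \<phi>_def cls_def using hal[of "k + 2 - N"] N_pos by auto
    next
      case 3 then show ?thesis unfolding \<phi>_def cls_def using he N_pos by auto
    next
      case 4 then show ?thesis unfolding \<phi>_def cls_def using he N_pos by auto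
    qed
  qed
  have rle: "r \<le> 2 * N" "2 * N - 1 \<le> r" unfolding r_def by auto
  have ker: "\<forall>k<r. c k = 0" if hc: "\<forall>i<n. (\<Sum>k<r. X $$ (i, \<phi> k) * c k) = 0" for c
  proof -
    have mid: "c (t - 1) = 0 \<and> c (t + N - 2) = 0" if t: "1 \<le> t" "t \<le> N - 1" for t
    proof -
      define k1 where "k1 = t - 1"
      define k2 where "k2 = t + N - 2"
      have k12: "k1 < r" "k2 < r" "k1 \<noteq> k2" unfolding k1_def k2_def using t rle N5 by auto
      have pk1: "\<phi> k1 = al t" unfolding \<phi>_def k1_def using t by auto
      have pk2: "\<phi> k2 = be t"
      proof -
        have "\<not> k2 < N - 1" "k2 < 2 * N - 2" "k2 + 2 - N = t" unfolding k2_def using t N5 by auto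
        then show ?thesis unfolding \<phi>_def by simp
      qed
      have ct: "cls k = t \<Longrightarrow> k < 2 * N \<Longrightarrow> k = k1 \<or> k = k2" for k
        unfolding cls_def k1_def k2_def using t by (auto split: if_splits)
      have nonext: "int t - int m \<noteq> - int m" "int t - int m \<noteq> int N - int m" using t by auto
      have rowsum: "(\<Sum>k<r. X $$ (i, \<phi> k) * c k) = X $$ (i, al t) * c k1 + X $$ (i, be t) * c k2"
        if i: "i < n" "h i = int t - int m" for i
      proof -
        have "(\<Sum>k<r. X $$ (i, \<phi> k) * c k) = X $$ (i, \<phi> k1) * c k1 + X $$ (i, \<phi> k2) * c k2"
        proof (rule sum_two_pts[OF k12])
          fix k assume k: "k < r" "k \<noteq> k1" "k \<noteq> k2"
          have k2N: "k < 2 * N" using k rle by simp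
          have "cls k \<noteq> t"
          proof
            assume "cls k = t"
            then have "k = k1 \<or> k = k2" using ct[OF _ k2N] by blast
            then show False using k by blast
          qed
          then have "h (\<phi> k) \<noteq> h i" using hphi[of k] k rle i by auto
          then show "X $$ (i, \<phi> k) * c k = 0" using Xe[OF i(1) \<phi>n] i nonext by auto
        qed
        then show ?thesis unfolding pk1 pk2 .
      qed
      define n0 where "n0 = int K - int (pa t + qa t)"
      have alt: "al t < n" "be t < n" unfolding al_def be_def n_def by (simp_all add: R_lt)
      have v11: "X $$ (al t, al t) = complex_of_real (s * f n0)"
        using Xe[OF alt(1) alt(1)] hal[OF t] moal[OF t] nonext unfolding n0_def by (simp add: add.commute)
      have v12: "X $$ (al t, be t) = complex_of_real (s * f (n0 - 1))"
        using Xe[OF alt(1) alt(2)] hal[OF t] moal[OF t] nonext unfolding n0_def by (simp add: algebra_simps)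
      have v21: "X $$ (be t, al t) = complex_of_real (s * f (n0 - 1))"
        using Xe[OF alt(2) alt(1)] hal[OF t] moal[OF t] nonext unfolding n0_def by (simp add: algebra_simps)
      have v22: "X $$ (be t, be t) = complex_of_real (s * f (n0 - 2))"
        using Xe[OF alt(2) alt(2)] hal[OF t] moal[OF t] nonext unfolding n0_def by (simp add: algebra_simps)
      have eq1: "complex_of_real (s * f n0) * c k1 + complex_of_real (s * f (n0 - 1)) * c k2 = 0"
        using hc alt rowsum[OF alt(1) hal(1)[OF t]] v11 v12 by simp
      have eq2: "complex_of_real (s * f (n0 - 1)) * c k1 + complex_of_real (s * f (n0 - 2)) * c k2 = 0"
        using hc alt rowsum[OF alt(2) hal(2)[OF t]] v21 v22 by simp
      have cas: "f n0 * f (n0 - 2) - f (n0 - 1) ^ 2 = Z" using casorati[of "n0 - 1"] by simp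
      have "(s * f n0) * (s * f (n0 - 2)) - (s * f (n0 - 1)) * (s * f (n0 - 1)) = s * s * (f n0 * f (n0 - 2) - f (n0 - 1) ^ 2)"
        by (simp add: algebra_simps power2_eq_square)
      then have "(s * f n0) * (s * f (n0 - 2)) - (s * f (n0 - 1)) * (s * f (n0 - 1)) = s * s * Z"
        unfolding cas .
      then have "complex_of_real (s * f n0) * complex_of_real (s * f (n0 - 2)) - complex_of_real (s * f (n0 - 1)) * complex_of_real (s * f (n0 - 1)) \<noteq> 0"
        using s_pos Zp by (metis mult_pos_pos of_real_diff of_real_eq_0_iff of_real_mult less_irrefl)
      then show ?thesis using solve2[OF eq1 eq2] unfolding k1_def k2_def by simp
    qed
    have ext: "c (2 * N - 2) = 0 \<and> (m < K \<longrightarrow> c (2 * N - 1) = 0)"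
    proof -
      have e12n: "e1 < n" "e2 < n" unfolding e1_def e2_def n_def by (simp_all add: R_lt)
      have pe2: "\<phi> (2 * N - 2) = e2" unfolding \<phi>_def using N5 by auto
      have pe1: "\<phi> (2 * N - 1) = e1" unfolding \<phi>_def using N5 by auto
      have cls_mid: "1 \<le> cls k \<and> cls k \<le> N - 1" if "k < 2 * N - 2" for k
        unfolding cls_def using that N5 by auto
      have zero_other: "X $$ (i, \<phi> k) = 0" if i: "i < n" "h i = - int m \<or> h i = int N - int m" and k: "k < 2 * N - 2" for i k
      proof -
        have "h (\<phi> k) \<noteq> - int m" "h (\<phi> k) \<noteq> int N - int m" using hphi[of k] cls_mid[OF k] k by auto
        then show ?thesis using Xe[OF i(1) \<phi>n] i(2) by auto
      qed
      define A where "A = f (int K - int m)"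
      have ve22: "X $$ (e2, e2) = complex_of_real (s * A)"
        using Xe[OF e12n(2) e12n(2)] he moe f_refl[OF mN(1)] N_pos unfolding A_def by simp
      show ?thesis
      proof (cases "m = K")
        case True
        then have r: "r = 2 * N - 1" unfolding r_def by simp
        have "(\<Sum>k<r. X $$ (e2, \<phi> k) * c k) = X $$ (e2, \<phi> (2 * N - 2)) * c (2 * N - 2)"
          by (rule sum_one_pt) (use r N5 zero_other[OF e12n(2)] he in auto)
        then have "complex_of_real (s * A) * c (2 * N - 2) = 0" using hc e12n ve22 pe2 by simp
        moreover have "A = 1" unfolding A_def using True f0 by simp
        ultimately show ?thesis using s_pos True by simp
      next
        case False
        then have r: "r = 2 * N" and mK: "m < K" unfolding r_def using m by auto
        have A1: "A > 1" unfolding A_def using mK by (intro f_gt1) auto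
        have ve11: "X $$ (e1, e1) = complex_of_real (s * A)"
          using Xe[OF e12n(1) e12n(1)] he moe N_pos unfolding A_def by simp
        have ve12: "X $$ (e1, e2) = complex_of_real (s * \<sigma>)"
          using Xe[OF e12n(1) e12n(2)] he moe N_pos by simp
        have ve21: "X $$ (e2, e1) = complex_of_real (s * \<sigma>)"
          using Xe[OF e12n(2) e12n(1)] he moe N_pos by simp
        have s1: "(\<Sum>k<r. X $$ (e1, \<phi> k) * c k) = X $$ (e1, \<phi> (2 * N - 1)) * c (2 * N - 1) + X $$ (e1, \<phi> (2 * N - 2)) * c (2 * N - 2)"
          by (rule sum_two_pts) (use r N5 zero_other[OF e12n(1)] he in auto)
        have s2: "(\<Sum>k<r. X $$ (e2, \<phi> k) * c k) = X $$ (e2, \<phi> (2 * N - 1)) * c (2 * N - 1) + X $$ (e2, \<phi> (2 * N - 2)) * c (2 * N - 2)"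
          by (rule sum_two_pts) (use r N5 zero_other[OF e12n(2)] he in auto)
        have eq1: "complex_of_real (s * A) * c (2 * N - 1) + complex_of_real (s * \<sigma>) * c (2 * N - 2) = 0"
          using hc e12n s1 ve11 ve12 pe1 pe2 by simp
        have eq2: "complex_of_real (s * \<sigma>) * c (2 * N - 1) + complex_of_real (s * A) * c (2 * N - 2) = 0"
          using hc e12n s2 ve21 ve22 pe1 pe2 by simp
        have "A * A > 1" using A1 by (rule less_1_mult) (rule A1)
        then have "(s * A) * (s * A) - (s * \<sigma>) * (s * \<sigma>) \<noteq> 0" using s_pos sig2
          by (simp add: algebra_simps)
        then have "complex_of_real (s * A) * complex_of_real (s * A) - complex_of_real (s * \<sigma>) * complex_of_real (s * \<sigma>) \<noteq> 0"
          by (metis of_real_diff of_real_eq_0_iff of_real_mult)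
        then show ?thesis using solve2[OF eq1 eq2] by simp
      qed
    qed
    show ?thesis
    proof (intro allI impI)
      fix k assume k: "k < r"
      consider "k < N - 1" | "N - 1 \<le> k" "k < 2 * N - 2" | "k = 2 * N - 2" | "k = 2 * N - 1"
        by (insert k rle, cases "k < N - 1"; cases "k < 2 * N - 2"; cases "k = 2 * N - 2") auto
      then show "c k = 0"
      proof cases
        case 1 then show ?thesis using mid[of "k + 1"] by simp
      next
        case 2 then show ?thesis using mid[of "k + 2 - N"] N5 by simp
      next
        case 3 then show ?thesis using ext by simp
      next
        case 4 then show ?thesis using ext k unfolding r_def using m by (auto split: if_splits)
      qed
    qed
  qed
  have "r \<le> vec_space.rank n X"
    by (rule rank_lower[where \<phi> = \<phi>]) (use ker \<phi>n in \<open>auto simp: X_def n_def ptrans_carrier\<close>)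
  then show ?thesis unfolding mrank_def r_def X_def n_def .
qed

end


theorem theorem7:
  fixes K N :: nat and Z :: real and \<sigma> :: real and f :: "int \<Rightarrow> real"
    and d od \<rho> :: "complex mat"
  assumes "K > 1" and "N = 2 * K + 1" and "Z > 0" and "\<sigma> \<in> {1, -1}"
    and "f 0 = 1" and "f 1 = 1 + Z" and "\<forall>k. f (k + 2) = (2 + Z) * f (k + 1) - f k"
    and "d = msum (2 ^ N) (\<lambda>k. complex_of_real (real (N choose k) * f (int K - int k))
                 \<cdot>\<^sub>m ketbra (dicke N k) (dicke N k)) {0..N}"
    and "od = complex_of_real \<sigma> \<cdot>\<^sub>m (ketbra (dicke N 0) (dicke N N) + ketbra (dicke N N) (dicke N 0))"
    and "\<rho> = complex_of_real (1 / (2 * (4 + Z) ^ K)) \<cdot>\<^sub>m (d + od)"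
  shows "density (2 ^ N) \<rho> \<and> ppt_all N \<rho>
    \<and> mrank (2 ^ N) \<rho> = N + 1
    \<and> (\<forall>m. 1 \<le> m \<and> m < K \<longrightarrow> mrank (2 ^ N) (ptrans N {..<m} \<rho>) = 2 * N)
    \<and> mrank (2 ^ N) (ptrans N {..<K} \<rho>) = 2 * N - 1
    \<and> extreme_point_mat \<rho> (ppt_states N)
    \<and> \<not> fully_separable N \<rho>"
proof -
  interpret q: qs K N Z \<sigma> f
    by unfold_locales (use assms(1-7) in auto)
  have r: "\<rho> = q.rho"
    unfolding assms(10) assms(8) assms(9) q.rho_def q.dmat_def q.odmat_def ..
  have m1: "mrank (2 ^ N) (ptrans N {..<m} \<rho>) = 2 * N" if "1 \<le> m" "m < K" for m
    using q.rank_pt_upper[of m] q.rank_pt_lower[of m] that unfolding r by simp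
  have mK: "mrank (2 ^ N) (ptrans N {..<K} \<rho>) = 2 * N - 1"
    using q.rank_pt_upper[of K] q.rank_pt_lower[of K] assms(1) unfolding r by simp
  show ?thesis
    unfolding r using q.density_rho q.ppt_rho q.rank_rho m1[unfolded r] mK[unfolded r] q.extreme_rho q.not_sep by blast
qed


end
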